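(* Let $n\geq 2$ be an integer. The annihilating-ideal graph $\mathbb{AG}(\mathbb{Z}_n)$ is perfect if and only if $n$ is of one of the forms $p_1^{\alpha_1}$, $p_1^{\alpha_1}p_2^{\alpha_2}$, $p_1^{\alpha_1}p_2p_3$, or $p_1p_2p_3p_4$, where $p_1,p_2,p_3,p_4$ are distinct primes and $\alpha_1,\alpha_2\in\mathbb{N}=\{1,2,3,\dots\}$.
   Context: For a commutative ring $R$ with unity, the annihilating-ideal graph $\mathbb{AG}(R)$ is the simple graph whose vertex set is the set of all non-zero ideals $I$ of $R$ with non-zero annihilator (i.e. there is a non-zero ideal $J$ with $IJ=0$), and two distinct vertices $I,J$ are adjacent if and only if $IJ=0$. A graph $G$ is perfect if $\omega(H)=\chi(H)$ (clique number equals chromatic number) for every induced subgraph $H$ of $G$. *)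

theory Defs
  imports "HOL-Algebra.Ideal_Product" "HOL-Number_Theory.Residues"
begin

definition is_clique :: "'a set \<Rightarrow> ('a \<Rightarrow> 'a \<Rightarrow> bool) \<Rightarrow> 'a set \<Rightarrow> bool" where
  "is_clique V E C \<longleftrightarrow> C \<subseteq> V \<and> (\<forall>x\<in>C. \<forall>y\<in>C. x \<noteq> y \<longrightarrow> E x y)"

definition clique_number :: "'a set \<Rightarrow> ('a \<Rightarrow> 'a \<Rightarrow> bool) \<Rightarrow> nat" where
  "clique_number V E = Sup {card C | C. is_clique V E C \<and> finite C}"

definition proper_colouring :: "'a set \<Rightarrow> ('a \<Rightarrow> 'a \<Rightarrow> bool) \<Rightarrow> nat \<Rightarrow> ('a \<Rightarrow> nat) \<Rightarrow> bool" where
  "proper_colouring V E k f \<longleftrightarrow> f ` V \<subseteq> {..<k} \<and>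
     (\<forall>x\<in>V. \<forall>y\<in>V. x \<noteq> y \<longrightarrow> E x y \<longrightarrow> f x \<noteq> f y)"

definition chromatic_number :: "'a set \<Rightarrow> ('a \<Rightarrow> 'a \<Rightarrow> bool) \<Rightarrow> nat" where
  "chromatic_number V E = (LEAST k. \<exists>f. proper_colouring V E k f)"

text \<open>Induced subgraph on S: vertex set S with E restricted to S (the notions above
  only look at edges between vertices of the given vertex set).\<close>
definition perfect_graph :: "'a set \<Rightarrow> ('a \<Rightarrow> 'a \<Rightarrow> bool) \<Rightarrow> bool" where
  "perfect_graph V E \<longleftrightarrow> (\<forall>S\<subseteq>V. clique_number S E = chromatic_number S E)"

definition ag_vertices :: "('a, 'b) ring_scheme \<Rightarrow> 'a set set" where
  "ag_vertices R = {I. ideal I R \<and> I \<noteq> {\<zero>\<^bsub>R\<^esub>} \<and>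
      (\<exists>J. ideal J R \<and> J \<noteq> {\<zero>\<^bsub>R\<^esub>} \<and> ideal_prod R I J = {\<zero>\<^bsub>R\<^esub>})}"

definition ag_adj :: "('a, 'b) ring_scheme \<Rightarrow> 'a set \<Rightarrow> 'a set \<Rightarrow> bool" where
  "ag_adj R I J \<longleftrightarrow> I \<noteq> J \<and> ideal_prod R I J = {\<zero>\<^bsub>R\<^esub>}"

end

theory Submission
  imports Defs
begin

lemma clique_card_le:
  assumes "finite S" "is_clique S E C"
  shows "card C \<le> card S"
  using assms by (simp add: is_clique_def card_mono)

lemma clique_number_props:
  assumes "finite S"
  shows "(\<exists>C. is_clique S E C \<and> card C = clique_number S E)"
    and "\<And>C. is_clique S E C \<Longrightarrow> card C \<le> clique_number S E"
proof -
  let ?A = "{card C | C. is_clique S E C \<and> finite C}"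
  have fin: "finite ?A"
  proof (rule finite_subset[of _ "{..card S}"])
    show "?A \<subseteq> {..card S}" using clique_card_le[OF assms] by auto
  qed simp
  have ne: "?A \<noteq> {}"
    using is_clique_def[of S E "{}"] by auto
  have eq: "clique_number S E = Max ?A"
    unfolding clique_number_def using cSup_eq_Max[OF fin ne] .
  show "\<exists>C. is_clique S E C \<and> card C = clique_number S E"
    using Max_in[OF fin ne] eq by auto
  fix C assume "is_clique S E C"
  moreover have "finite C" using \<open>is_clique S E C\<close> assms
    by (meson is_clique_def finite_subset)
  ultimately show "card C \<le> clique_number S E" unfolding eq
    using fin by (intro Max_ge) auto
qed

lemma clique_le_colour:
  assumes "proper_colouring S E k f" "is_clique S E C" "finite C"
  shows "card C \<le> k"
proof -
  have "inj_on f C"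
    using assms unfolding inj_on_def proper_colouring_def is_clique_def by blast
  then have "card C = card (f ` C)" by (simp add: card_image)
  also have "\<dots> \<le> card {..<k}"
  proof (rule card_mono)
    have "C \<subseteq> S" "f ` S \<subseteq> {..<k}" using assms(1,2) unfolding proper_colouring_def is_clique_def by auto
    then show "f ` C \<subseteq> {..<k}" by (meson image_mono subset_trans)
  qed simp
  finally show ?thesis by simp
qed

lemma chromatic_eq_clique:
  assumes "finite S" "proper_colouring S E (clique_number S E) f"
  shows "chromatic_number S E = clique_number S E"
proof (rule antisym)
  show "chromatic_number S E \<le> clique_number S E"
    unfolding chromatic_number_def using assms(2) by (intro Least_le) blast
next
  have "\<exists>g. proper_colouring S E (chromatic_number S E) g"
    unfolding chromatic_number_def using assms(2) by (intro LeastI_ex[where P="\<lambda>k. \<exists>g. proper_colouring S E k g"]) blast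
  then obtain g where g: "proper_colouring S E (chromatic_number S E) g" by blast
  obtain C where C: "is_clique S E C" "card C = clique_number S E"
    using clique_number_props(1)[OF assms(1)] by blast
  have "finite C" using C assms(1) by (meson is_clique_def finite_subset)
  then show "clique_number S E \<le> chromatic_number S E"
    using clique_le_colour[OF g C(1)] C(2) by simp
qed

lemma clique_number_mono:
  assumes "finite S" "S' \<subseteq> S"
  shows "clique_number S' E \<le> clique_number S E"
proof -
  have "finite S'" using assms finite_subset by blast
  obtain C where C: "is_clique S' E C" "card C = clique_number S' E"
    using clique_number_props(1)[OF \<open>finite S'\<close>] by blast
  have "is_clique S E C" using C(1) assms(2) unfolding is_clique_def by blast
  then show ?thesis using clique_number_props(2)[OF assms(1)] C(2) by metis
qed

definition elim_vertex :: "'a set \<Rightarrow> ('a \<Rightarrow> 'a \<Rightarrow> bool) \<Rightarrow> 'a \<Rightarrow> bool" where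
  "elim_vertex S E v \<longleftrightarrow>
     (\<exists>w\<in>S. w \<noteq> v \<and> \<not> E v w \<and> (\<forall>u\<in>S. E v u \<longrightarrow> E w u)) \<or>
     (\<forall>u1\<in>S. \<forall>u2\<in>S. E v u1 \<longrightarrow> E v u2 \<longrightarrow> u1 \<noteq> u2 \<longrightarrow> E u1 u2)"

lemma colour_by_elim:
  assumes fin: "finite V"
    and sym: "\<And>x y. E x y \<Longrightarrow> E y x"
    and irr: "\<And>x. \<not> E x x"
    and H: "\<And>S. S \<subseteq> V \<Longrightarrow> S \<noteq> {} \<Longrightarrow> \<exists>v\<in>S. elim_vertex S E v"
  shows "S \<subseteq> V \<Longrightarrow> \<exists>f. proper_colouring S E (clique_number S E) f"
proof (induction "card S" arbitrary: S rule: less_induct)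
  case less
  show ?case
  proof (cases "S = {}")
    case True
    then show ?thesis unfolding proper_colouring_def by auto
  next
    case False
    have finS: "finite S" using less.prems fin finite_subset by blast
    obtain v where v: "v \<in> S" "elim_vertex S E v" using H[OF less.prems False] by blast
    let ?S' = "S - {v}"
    have "card ?S' < card S" using v(1) finS by (meson card_Diff1_less)
    then obtain f where f: "proper_colouring ?S' E (clique_number ?S' E) f"
      using less.hyps less.prems by blast
    have mono: "clique_number ?S' E \<le> clique_number S E"
      using clique_number_mono[OF finS] by blast
    show ?thesis
    proof (cases "\<exists>w\<in>S. w \<noteq> v \<and> \<not> E v w \<and> (\<forall>u\<in>S. E v u \<longrightarrow> E w u)")
      case True
      then obtain w where w: "w \<in> S" "w \<noteq> v" "\<not> E v w" "\<forall>u\<in>S. E v u \<longrightarrow> E w u" by blast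
      define g where "g = f(v := f w)"
      have "proper_colouring S E (clique_number S E) g"
        unfolding proper_colouring_def
      proof (intro conjI ballI impI)
        show "g ` S \<subseteq> {..<clique_number S E}"
          using f w mono unfolding proper_colouring_def g_def by auto
      next
        fix x y assume xy: "x \<in> S" "y \<in> S" "x \<noteq> y" "E x y"
        show "g x \<noteq> g y"
        proof (cases "x = v")
          case True
          then have "y \<noteq> v" "E v y" using xy by auto
          then have "E w y" "y \<noteq> w" using w xy by auto
          then show ?thesis using f \<open>y \<noteq> v\<close> True w xy unfolding proper_colouring_def g_def by auto
        next
          case False
          show ?thesis
          proof (cases "y = v")
            case True
            then have "E v x" using xy sym by blast
            then have "E w x" "x \<noteq> w" using w xy by auto
            then have "f w \<noteq> f x" using f False True w xy unfolding proper_colouring_def by auto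
            then show ?thesis using False True unfolding g_def by auto
          next
            case False2: False
            then show ?thesis using f False xy unfolding proper_colouring_def g_def by auto
          qed
        qed
      qed
      then show ?thesis by blast
    next
      case False
      then have simp: "\<forall>u1\<in>S. \<forall>u2\<in>S. E v u1 \<longrightarrow> E v u2 \<longrightarrow> u1 \<noteq> u2 \<longrightarrow> E u1 u2"
        using v(2) unfolding elim_vertex_def by blast
      define N where "N = {u\<in>S. E v u}"
      have vN: "v \<notin> N" using irr N_def by auto
      have "is_clique S E (insert v N)"
        unfolding is_clique_def
      proof (intro conjI ballI impI)
        show "insert v N \<subseteq> S" using v(1) N_def by auto
      next
        fix x y assume "x \<in> insert v N" "y \<in> insert v N" "x \<noteq> y"
        then consider "x = v" "y \<in> N" | "y = v" "x \<in> N" | "x \<in> N" "y \<in> N" by auto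
        then show "E x y"
        proof cases
          case 1 then show ?thesis using N_def by auto
        next
          case 2 then show ?thesis using N_def sym by blast
        next
          case 3 then show ?thesis using N_def simp \<open>x \<noteq> y\<close> by auto
        qed
      qed
      then have "card (insert v N) \<le> clique_number S E"
        using clique_number_props(2)[OF finS] by blast
      moreover have "finite N" using finS N_def by auto
      ultimately have cN: "card N < clique_number S E" using vN by simp
      have "card (f ` N) \<le> card N" using \<open>finite N\<close> card_image_le by blast
      then have "card (f ` N) < card {..<clique_number S E}" using cN by simp
      then have "\<not> {..<clique_number S E} \<subseteq> f ` N"
        using \<open>finite N\<close> by (meson card_mono finite_imageI not_le)
      then obtain c where c: "c < clique_number S E" "c \<notin> f ` N" by auto
      define g where "g = f(v := c)"
      have "proper_colouring S E (clique_number S E) g"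
        unfolding proper_colouring_def
      proof (intro conjI ballI impI)
        show "g ` S \<subseteq> {..<clique_number S E}"
          using f c mono unfolding proper_colouring_def g_def by auto
      next
        fix x y assume xy: "x \<in> S" "y \<in> S" "x \<noteq> y" "E x y"
        show "g x \<noteq> g y"
        proof (cases "x = v")
          case True
          then have "y \<in> N" using xy N_def by auto
          then show ?thesis using c True xy unfolding g_def by auto
        next
          case False
          show ?thesis
          proof (cases "y = v")
            case True
            then have "E v x" using xy sym by blast
            then have "x \<in> N" using xy N_def by auto
            then show ?thesis using c True False xy unfolding g_def by auto
          next
            case False2: False
            then show ?thesis using f False xy unfolding proper_colouring_def g_def by auto
          qed
        qed
      qed
      then show ?thesis by blast
    qed
  qed
qed

lemma perfect_by_elim:
  assumes fin: "finite V"
    and sym: "\<And>x y. E x y \<Longrightarrow> E y x"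
    and irr: "\<And>x. \<not> E x x"
    and H: "\<And>S. S \<subseteq> V \<Longrightarrow> S \<noteq> {} \<Longrightarrow> \<exists>v\<in>S. elim_vertex S E v"
  shows "perfect_graph V E"
  unfolding perfect_graph_def
proof (intro allI impI)
  fix S assume "S \<subseteq> V"
  then obtain f where "proper_colouring S E (clique_number S E) f"
    using colour_by_elim[OF assms] by blast
  moreover have "finite S" using \<open>S \<subseteq> V\<close> fin finite_subset by blast
  ultimately show "clique_number S E = chromatic_number S E"
    using chromatic_eq_clique by metis
qed

lemma iso_clique_number:
  assumes inj: "inj_on g V" and adj: "\<And>x y. x\<in>V \<Longrightarrow> y\<in>V \<Longrightarrow> E' (g x) (g y) = E x y"
    and S: "S \<subseteq> V"
  shows "clique_number (g ` S) E' = clique_number S E"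
proof -
  have injS: "inj_on g S" using inj S inj_on_subset by blast
  have "{card C' | C'. is_clique (g ` S) E' C' \<and> finite C'} = {card C | C. is_clique S E C \<and> finite C}"
  proof (intro equalityI subsetI)
    fix k assume "k \<in> {card C' | C'. is_clique (g ` S) E' C' \<and> finite C'}"
    then obtain C' where C': "is_clique (g ` S) E' C'" "finite C'" "k = card C'" by blast
    define C where "C = S \<inter> g -` C'"
    have gC: "g ` C = C'" using C'(1) unfolding C_def is_clique_def by auto
    have CS: "C \<subseteq> S" unfolding C_def by blast
    have injC: "inj_on g C" using inj_on_subset[OF injS CS] .
    have "card C = k" using card_image[OF injC] gC C'(3) by simp
    moreover have "finite C" using finite_imageD[OF _ injC] gC C'(2) by simp
    moreover have "is_clique S E C"
      unfolding is_clique_def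
    proof (intro conjI ballI impI)
      show "C \<subseteq> S" using C_def by auto
    next
      fix x y assume xy: "x \<in> C" "y \<in> C" "x \<noteq> y"
      then have "g x \<noteq> g y" using injC by (meson inj_onD)
      moreover have "g x \<in> C'" "g y \<in> C'" using xy C_def by auto
      ultimately have "E' (g x) (g y)" using C'(1) unfolding is_clique_def by blast
      then show "E x y" using adj xy C_def S by auto
    qed
    ultimately show "k \<in> {card C | C. is_clique S E C \<and> finite C}" by blast
  next
    fix k assume "k \<in> {card C | C. is_clique S E C \<and> finite C}"
    then obtain C where C: "is_clique S E C" "finite C" "k = card C" by blast
    have injC: "inj_on g C" using injS C(1) inj_on_subset unfolding is_clique_def by blast
    have "card (g ` C) = k" using injC C(3) card_image by blast
    moreover have "finite (g ` C)" using C(2) by simp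
    moreover have "is_clique (g ` S) E' (g ` C)"
      unfolding is_clique_def
    proof (intro conjI ballI impI)
      show "g ` C \<subseteq> g ` S" using C(1) unfolding is_clique_def by auto
    next
      fix x' y' assume "x' \<in> g ` C" "y' \<in> g ` C" "x' \<noteq> y'"
      then obtain x y where xy: "x \<in> C" "y \<in> C" "x' = g x" "y' = g y" "x \<noteq> y" by blast
      then have "E x y" using C(1) unfolding is_clique_def by blast
      then show "E' x' y'" using adj[of x y] xy C(1) S unfolding is_clique_def by auto
    qed
    ultimately show "k \<in> {card C' | C'. is_clique (g ` S) E' C' \<and> finite C'}" by blast
  qed
  then show ?thesis unfolding clique_number_def by simp
qed

lemma iso_chromatic_number:
  assumes inj: "inj_on g V" and adj: "\<And>x y. x\<in>V \<Longrightarrow> y\<in>V \<Longrightarrow> E' (g x) (g y) = E x y"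
    and S: "S \<subseteq> V"
  shows "chromatic_number (g ` S) E' = chromatic_number S E"
proof -
  have "\<And>k. (\<exists>f. proper_colouring (g ` S) E' k f) = (\<exists>f. proper_colouring S E k f)"
  proof
    fix k assume "\<exists>f. proper_colouring (g ` S) E' k f"
    then obtain f where f: "proper_colouring (g ` S) E' k f" by blast
    have "proper_colouring S E k (f \<circ> g)"
      unfolding proper_colouring_def
    proof (intro conjI ballI impI)
      show "(f \<circ> g) ` S \<subseteq> {..<k}" using f unfolding proper_colouring_def by auto
    next
      fix x y assume xy: "x \<in> S" "y \<in> S" "x \<noteq> y" "E x y"
      then have "g x \<noteq> g y" using inj S by (meson inj_onD subsetD)
      moreover have "E' (g x) (g y)" using adj xy S by auto
      ultimately show "(f \<circ> g) x \<noteq> (f \<circ> g) y" using f xy unfolding proper_colouring_def by auto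
    qed
    then show "\<exists>f. proper_colouring S E k f" by blast
  next
    fix k assume "\<exists>f. proper_colouring S E k f"
    then obtain f where f: "proper_colouring S E k f" by blast
    define h where "h = f \<circ> inv_into V g"
    have hg: "h (g x) = f x" if "x \<in> V" for x
      using that inj unfolding h_def by simp
    have "proper_colouring (g ` S) E' k h"
      unfolding proper_colouring_def
    proof (intro conjI ballI impI)
      show "h ` g ` S \<subseteq> {..<k}" using f hg S unfolding proper_colouring_def by auto
    next
      fix x' y' assume "x' \<in> g ` S" "y' \<in> g ` S" "x' \<noteq> y'" "E' x' y'"
      then obtain x y where xy: "x \<in> S" "y \<in> S" "x' = g x" "y' = g y" "x \<noteq> y" "E' (g x) (g y)" by blast
      then have "E x y" using adj S by auto
      then have "f x \<noteq> f y" using f xy unfolding proper_colouring_def by auto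
      moreover have "x \<in> V" "y \<in> V" using xy S by auto
      ultimately show "h x' \<noteq> h y'" using hg[of x] hg[of y] xy by auto
    qed
    then show "\<exists>f. proper_colouring (g ` S) E' k f" by blast
  qed
  then show ?thesis unfolding chromatic_number_def by simp
qed

lemma perfect_iso:
  assumes inj: "inj_on g V" and adj: "\<And>x y. x\<in>V \<Longrightarrow> y\<in>V \<Longrightarrow> E' (g x) (g y) = E x y"
  shows "perfect_graph (g ` V) E' = perfect_graph V E"
proof
  assume P: "perfect_graph (g ` V) E'"
  show "perfect_graph V E" unfolding perfect_graph_def
  proof (intro allI impI)
    fix S assume S: "S \<subseteq> V"
    then have "clique_number (g ` S) E' = chromatic_number (g ` S) E'"
      using P unfolding perfect_graph_def by blast
    then show "clique_number S E = chromatic_number S E"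
      using iso_clique_number[of g V E' E S, OF inj adj S] iso_chromatic_number[of g V E' E S, OF inj adj S] by simp
  qed
next
  assume P: "perfect_graph V E"
  show "perfect_graph (g ` V) E'" unfolding perfect_graph_def
  proof (intro allI impI)
    fix S' assume S': "S' \<subseteq> g ` V"
    define S where "S = V \<inter> g -` S'"
    have S: "S \<subseteq> V" and gS: "g ` S = S'" using S' S_def by auto
    have "clique_number S E = chromatic_number S E" using P S unfolding perfect_graph_def by blast
    then show "clique_number S' E' = chromatic_number S' E'"
      using iso_clique_number[of g V E' E S, OF inj adj S] iso_chromatic_number[of g V E' E S, OF inj adj S] gS by simp
  qed
qed

lemma three_elems:
  assumes "finite C" "3 \<le> card C"
  obtains x y z where "x \<in> C" "y \<in> C" "z \<in> C" "x \<noteq> y" "x \<noteq> z" "y \<noteq> z"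
proof -
  obtain x where x: "x \<in> C" using assms by fastforce
  have "2 \<le> card (C - {x})" using assms x by simp
  then have "C - {x} \<noteq> {}" by (intro notI) simp
  then obtain y where y: "y \<in> C - {x}" by blast
  have "1 \<le> card (C - {x} - {y})" using assms x y by simp
  then have "C - {x} - {y} \<noteq> {}" by (intro notI) simp
  then obtain z where z: "z \<in> C - {x} - {y}" by blast
  show ?thesis using that x y z by blast
qed

lemma c5_not_perfect:
  assumes V: "a \<in> V" "b \<in> V" "c \<in> V" "d \<in> V" "e \<in> V"
    and E1: "E a b" "E b c" "E c d" "E d e" "E e a"
    and E2: "E b a" "E c b" "E d c" "E e d" "E a e"
    and N1: "\<not> E a c" "\<not> E a d" "\<not> E b d" "\<not> E b e" "\<not> E c e"
    and N2: "\<not> E c a" "\<not> E d a" "\<not> E d b" "\<not> E e b" "\<not> E e c"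
    and irr: "\<And>x. \<not> E x x"
  shows "\<not> perfect_graph V E"
proof
  assume P: "perfect_graph V E"
  have dist: "a \<noteq> b" "a \<noteq> c" "a \<noteq> d" "a \<noteq> e" "b \<noteq> c" "b \<noteq> d" "b \<noteq> e"
    "c \<noteq> d" "c \<noteq> e" "d \<noteq> e"
    using E1 N1 N2 irr by metis+
  define S where "S = {a, b, c, d, e}"
  have SV: "S \<subseteq> V" using V S_def by auto
  have finS: "finite S" using S_def by simp
  have eq: "clique_number S E = chromatic_number S E" using P SV unfolding perfect_graph_def by blast
  obtain C where C: "is_clique S E C" "card C = clique_number S E"
    using clique_number_props(1)[OF finS] by blast
  have "card C \<le> 2"
  proof (rule ccontr)
    assume "\<not> card C \<le> 2"
    then have "3 \<le> card C" by simp
    moreover have "finite C" using C(1) finS unfolding is_clique_def by (meson finite_subset)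
    ultimately obtain x y z where xyz: "x \<in> C" "y \<in> C" "z \<in> C" "x \<noteq> y" "x \<noteq> z" "y \<noteq> z"
      using three_elems by blast
    have "E x y" "E x z" "E y z" using C(1) xyz unfolding is_clique_def by auto
    moreover have "x \<in> S" "y \<in> S" "z \<in> S" using C(1) xyz unfolding is_clique_def by auto
    ultimately show False using N1 N2 xyz unfolding S_def by auto
  qed
  define f :: "_ \<Rightarrow> nat" where "f x = (if x = e then 2 else if x = b \<or> x = d then 1 else 0)" for x
  have "proper_colouring S E 3 f"
    unfolding proper_colouring_def
  proof (intro conjI ballI impI)
    show "f ` S \<subseteq> {..<3}" unfolding f_def by auto
  next
    fix x y assume "x \<in> S" "y \<in> S" "x \<noteq> y" "E x y"
    then show "f x \<noteq> f y" using N1 N2 dist unfolding S_def f_def by auto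
  qed
  then have "\<exists>g. proper_colouring S E (chromatic_number S E) g"
    unfolding chromatic_number_def by (intro LeastI_ex[where P="\<lambda>k. \<exists>g. proper_colouring S E k g"]) blast
  then obtain g where g: "proper_colouring S E (chromatic_number S E) g" by blast
  have "chromatic_number S E \<le> 2" using eq C(2) \<open>card C \<le> 2\<close> by simp
  then have lt: "g a < 2" "g b < 2" "g c < 2" "g d < 2" "g e < 2"
    using g unfolding proper_colouring_def S_def by auto
  have ne: "g a \<noteq> g b" "g b \<noteq> g c" "g c \<noteq> g d" "g d \<noteq> g e" "g e \<noteq> g a"
    using g E1 dist unfolding proper_colouring_def S_def by auto
  show False using lt ne by linarith
qed

context residues
begin

definition Idv :: "int \<Rightarrow> int set" where
  "Idv d = {x \<in> carrier R. d dvd x}"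

lemma Idv_PIdl:
  assumes "d > 0" "d dvd m"
  shows "Idv d = PIdl (d mod m)"
proof (intro equalityI subsetI)
  fix y assume "y \<in> Idv d"
  then have y: "0 \<le> y" "y \<le> m - 1" "d dvd y" unfolding Idv_def by (auto simp: res_carrier_eq)
  then obtain k where k: "y = d * k" by blast
  have "k \<ge> 0" using k y assms by (simp add: zero_le_mult_iff)
  moreover have "k \<le> y" using k assms \<open>k \<ge> 0\<close> by (simp add: mult_le_cancel_right1 mult.commute)
  ultimately have kc: "k \<in> carrier R" using y by (simp add: res_carrier_eq)
  have "k \<otimes> (d mod m) = (k * (d mod m)) mod m" by (simp add: res_mult_eq)
  also have "\<dots> = (k * d) mod m" by (simp add: mod_mult_right_eq)
  also have "\<dots> = y" using k y by (simp add: mult.commute)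
  finally show "y \<in> PIdl (d mod m)" unfolding cgenideal_def using kc by force
next
  fix y assume "y \<in> PIdl (d mod m)"
  then obtain x where x: "x \<in> carrier R" "y = x \<otimes> (d mod m)" unfolding cgenideal_def by blast
  have "y = (x * (d mod m)) mod m" using x by (simp add: res_mult_eq)
  moreover have "d dvd (x * (d mod m)) mod m"
    using assms by (simp add: dvd_mod_iff)
  moreover have "y \<in> carrier R" using x by (simp add: res_carrier_eq res_mult_eq)
  ultimately show "y \<in> Idv d" unfolding Idv_def by auto
qed

lemma Idv_ideal:
  assumes "d > 0" "d dvd m"
  shows "ideal (Idv d) R"
proof -
  have "d mod m \<in> carrier R" using m_gt_one by (simp add: res_carrier_eq)
  then show ?thesis using Idv_PIdl[OF assms] cgenideal_ideal by simp
qed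

lemma Idv_m: "Idv m = {\<zero>}"
  unfolding Idv_def using m_gt_one
  by (auto simp: res_carrier_eq res_zero_eq zdvd_imp_le dest: zdvd_imp_le)

lemma Idv_self:
  assumes "d > 0" "d < m"
  shows "d \<in> Idv d"
  using assms unfolding Idv_def by (simp add: res_carrier_eq)

lemma zero_in_Idv: "\<zero> \<in> Idv d"
  unfolding Idv_def using m_gt_one by (simp add: res_carrier_eq res_zero_eq)

lemma ideal_is_Idv:
  assumes I: "ideal I R"
  shows "\<exists>d. d > 0 \<and> d dvd m \<and> I = Idv d"
proof (cases "\<exists>x\<in>I. x > 0")
  case False
  have "I \<subseteq> carrier R" using I by (simp add: ideal.axioms(1) additive_subgroup.a_subset)
  then have "I \<subseteq> {0}" using False by (force simp: res_carrier_eq)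
  moreover have "\<zero> \<in> I" using I by (simp add: additive_subgroup.zero_closed ideal.axioms(1))
  ultimately have "I = {\<zero>}" by (auto simp: res_zero_eq)
  then have "I = Idv m" using Idv_m by simp
  moreover have "m > 0" using m_gt_one by simp
  ultimately show ?thesis by (intro exI[of _ m]) simp
next
  case True
  have sub: "I \<subseteq> carrier R" using I by (simp add: ideal.axioms(1) additive_subgroup.a_subset)
  have finI: "finite I" using sub finite_subset by blast
  define P where "P = {x\<in>I. x > 0}"
  have finP: "finite P" "P \<noteq> {}" using finI True P_def by auto
  define d where "d = Min P"
  have dP: "d \<in> P" using finP d_def Min_in by blast
  have dmin: "\<And>x. x \<in> I \<Longrightarrow> x > 0 \<Longrightarrow> d \<le> x" using finP d_def P_def by auto
  have dI: "d \<in> I" "d > 0" using dP P_def by auto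
  have dc: "d \<in> carrier R" using dI sub by auto
  then have dlt: "d < m" by (simp add: res_carrier_eq)
  have red: "y mod d \<in> I" if yI: "y \<in> I" for y
  proof -
    have yc: "y \<in> carrier R" using yI sub by auto
    define q where "q = y div d"
    have qc: "q mod m \<in> carrier R" using m_gt_one by (simp add: res_carrier_eq)
    have t1: "(q mod m) \<otimes> d \<in> I" using I qc dI by (simp add: ideal.I_l_closed)
    have t1': "(q mod m) \<otimes> d = (q * d) mod m" by (simp add: res_mult_eq mod_mult_left_eq)
    have t2: "\<ominus> ((q * d) mod m) \<in> I" using t1 t1' I
      by (metis additive_subgroup.a_inv_closed ideal.axioms(1))
    have t2': "\<ominus> ((q * d) mod m) = (- (q * d)) mod m" by (simp add: res_neg_eq mod_minus_eq)
    have t3: "y \<oplus> (- (q * d)) mod m \<in> I" using t2 t2' yI I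
      by (metis additive_subgroup.a_closed ideal.axioms(1))
    have "y \<oplus> (- (q * d)) mod m = (y - q * d) mod m" by (simp add: res_add_eq mod_add_right_eq)
    also have "y - q * d = y mod d" unfolding q_def by (simp add: minus_div_mult_eq_mod)
    also have "(y mod d) mod m = y mod d"
    proof (rule mod_pos_pos_trivial)
      show "0 \<le> y mod d" using dI by simp
      have "y mod d < d" using dI by simp
      then show "y mod d < m" using dlt by simp
    qed
    finally show ?thesis using t3 by simp
  qed
  have mI: "m mod d \<in> I"
  proof -
    have "\<zero> \<in> I" using I by (simp add: additive_subgroup.zero_closed ideal.axioms(1))
    \<comment> \<open>m mod d = (-(m div d * d)) mod m up to reduction; reuse red on a suitable element\<close>
    define q where "q = m div d"
    have qc: "q mod m \<in> carrier R" using m_gt_one by (simp add: res_carrier_eq)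
    have t1: "(q mod m) \<otimes> d \<in> I" using I qc dI by (simp add: ideal.I_l_closed)
    have t1': "(q mod m) \<otimes> d = (q * d) mod m" by (simp add: res_mult_eq mod_mult_left_eq)
    have t2: "\<ominus> ((q * d) mod m) \<in> I" using t1 t1' I
      by (metis additive_subgroup.a_inv_closed ideal.axioms(1))
    have t2': "\<ominus> ((q * d) mod m) = (- (q * d)) mod m" by (simp add: res_neg_eq mod_minus_eq)
    have "(- (q * d)) mod m = (m - q * d) mod m" by (simp add: mod_diff_left_eq[symmetric])
    also have "m - q * d = m mod d" unfolding q_def by (simp add: minus_div_mult_eq_mod)
    also have "(m mod d) mod m = m mod d"
    proof (rule mod_pos_pos_trivial)
      show "0 \<le> m mod d" using dI by simp
      have "m mod d < d" using dI by simp
      then show "m mod d < m" using dlt by simp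
    qed
    finally show ?thesis using t2 t2' by simp
  qed
  have "m mod d = 0"
  proof (rule ccontr)
    assume "m mod d \<noteq> 0"
    then have "m mod d > 0" using dI by (simp add: order_le_neq_trans pos_mod_sign)
    then have "d \<le> m mod d" using dmin mI by blast
    moreover have "m mod d < d" using dI by simp
    ultimately show False by simp
  qed
  then have dm: "d dvd m" by (simp add: dvd_eq_mod_eq_0)
  have "I = Idv d"
  proof (intro equalityI subsetI)
    fix y assume yI: "y \<in> I"
    have "y mod d = 0"
    proof (rule ccontr)
      assume "y mod d \<noteq> 0"
      then have "y mod d > 0" using dI by (simp add: order_le_neq_trans pos_mod_sign)
      then have "d \<le> y mod d" using dmin red yI by blast
      moreover have "y mod d < d" using dI by simp
      ultimately show False by simp
    qed
    then show "y \<in> Idv d" using yI sub unfolding Idv_def by auto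
  next
    fix y assume "y \<in> Idv d"
    then have y: "y \<in> carrier R" "d dvd y" unfolding Idv_def by auto
    then obtain k where k: "y = d * k" by blast
    have "0 \<le> y" "y \<le> m - 1" using y by (auto simp: res_carrier_eq)
    then have "k \<ge> 0" using k dI by (simp add: zero_le_mult_iff)
    moreover have "k \<le> y" using k dI \<open>k \<ge> 0\<close> by (simp add: mult_le_cancel_right1 mult.commute)
    ultimately have kc: "k \<in> carrier R" using \<open>y \<le> m - 1\<close> by (simp add: res_carrier_eq)
    have "k \<otimes> d \<in> I" using I kc dI by (simp add: ideal.I_l_closed)
    moreover have "k \<otimes> d = y" using k \<open>0 \<le> y\<close> \<open>y \<le> m - 1\<close>
      by (simp add: res_mult_eq mult.commute)
    ultimately show "y \<in> I" by simp
  qed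
  then show ?thesis using dm dI by blast
qed

lemma Idv_prod_zero:
  assumes "d > 0" "d dvd m" "d' > 0" "d' dvd m"
  shows "ideal_prod R (Idv d) (Idv d') = {\<zero>} \<longleftrightarrow> m dvd d * d'"
proof
  assume "m dvd d * d'"
  have "s = \<zero>" if "s \<in> ideal_prod R (Idv d) (Idv d')" for s
    using that
  proof (induct s rule: ideal_prod.induct)
    case (prod i j)
    then have "d * d' dvd i * j" unfolding Idv_def by (auto intro: mult_dvd_mono)
    then have "m dvd i * j" using \<open>m dvd d * d'\<close> by (rule dvd_trans[rotated])
    then show ?case by (simp add: res_mult_eq res_zero_eq)
  next
    case (sum s1 s2)
    then show ?case by (simp add: res_add_eq res_zero_eq)
  qed
  moreover have "\<zero> \<in> ideal_prod R (Idv d) (Idv d')"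
    using ideal_prod.prod[OF zero_in_Idv[of d] zero_in_Idv[of d'], of R] by (simp add: res_mult_eq res_zero_eq)
  ultimately show "ideal_prod R (Idv d) (Idv d') = {\<zero>}" by blast
next
  assume Z: "ideal_prod R (Idv d) (Idv d') = {\<zero>}"
  show "m dvd d * d'"
  proof (rule ccontr)
    assume nd: "\<not> m dvd d * d'"
    have "d \<noteq> m" "d' \<noteq> m" using nd by auto
    moreover have "d \<le> m" "d' \<le> m" using assms m_gt_one by (auto intro: zdvd_imp_le)
    ultimately have "d < m" "d' < m" by auto
    then have "d \<in> Idv d" "d' \<in> Idv d'" using Idv_self assms by auto
    then have "d \<otimes> d' \<in> ideal_prod R (Idv d) (Idv d')" by (rule ideal_prod.prod)
    then have "(d * d') mod m = 0" using Z by (simp add: res_mult_eq res_zero_eq)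
    then show False using nd by (simp add: dvd_eq_mod_eq_0)
  qed
qed

end

definition Dn :: "nat \<Rightarrow> nat set" where
  "Dn n = {d. d dvd n \<and> 1 < d \<and> d < n}"

definition En :: "nat \<Rightarrow> nat \<Rightarrow> nat \<Rightarrow> bool" where
  "En n d d' \<longleftrightarrow> d \<noteq> d' \<and> n dvd d * d'"

lemma ag_iso:
  assumes n: "n \<ge> 2"
  shows "perfect_graph (ag_vertices (residue_ring (int n))) (ag_adj (residue_ring (int n)))
     = perfect_graph (Dn n) (En n)"
proof -
  interpret residues "int n" "residue_ring (int n)"
    using n by unfold_locales auto
  let ?R = "residue_ring (int n)"
  define g where "g d = Idv (int d)" for d
  have pos: "int d > 0" "int d dvd int n" if "d \<in> Dn n" for d
    using that unfolding Dn_def by auto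
  have inj: "inj_on g (Dn n)"
  proof (rule inj_onI)
    fix x y assume xy: "x \<in> Dn n" "y \<in> Dn n" "g x = g y"
    have "int x \<in> Idv (int x)" "int y \<in> Idv (int y)"
      using xy by (auto simp: Dn_def intro!: Idv_self)
    then have "int x \<in> g y" "int y \<in> g x" using xy(3) unfolding g_def by auto
    then have "int y dvd int x" "int x dvd int y" unfolding g_def Idv_def by auto
    then show "x = y" by (simp add: dvd_antisym)
  qed
  have adj: "ag_adj ?R (g x) (g y) = En n x y" if "x \<in> Dn n" "y \<in> Dn n" for x y
  proof -
    have "(g x \<noteq> g y) = (x \<noteq> y)" using inj that by (meson inj_onD)
    moreover have "(ideal_prod ?R (g x) (g y) = {\<zero>\<^bsub>?R\<^esub>}) = (int n dvd int x * int y)"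
      unfolding g_def using Idv_prod_zero pos that by blast
    moreover have "(int n dvd int x * int y) = (n dvd x * y)"
      by (metis of_nat_dvd_iff of_nat_mult)
    ultimately show ?thesis unfolding ag_adj_def En_def by simp
  qed
  have V: "ag_vertices ?R = g ` Dn n"
  proof (intro equalityI subsetI)
    fix I assume "I \<in> ag_vertices ?R"
    then obtain J where IJ: "ideal I ?R" "I \<noteq> {\<zero>\<^bsub>?R\<^esub>}" "ideal J ?R" "J \<noteq> {\<zero>\<^bsub>?R\<^esub>}"
       "ideal_prod ?R I J = {\<zero>\<^bsub>?R\<^esub>}" unfolding ag_vertices_def by blast
    obtain d where d: "d > 0" "d dvd int n" "I = Idv d" using ideal_is_Idv IJ(1) by blast
    obtain d' where d': "d' > 0" "d' dvd int n" "J = Idv d'" using ideal_is_Idv IJ(3) by blast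
    have "d \<noteq> int n" "d' \<noteq> int n" using IJ d d' Idv_m by auto
    moreover have "d \<le> int n" "d' \<le> int n" using d d' n by (auto intro: zdvd_imp_le)
    ultimately have lt: "d < int n" "d' < int n" by auto
    have dd: "int n dvd d * d'" using Idv_prod_zero d d' IJ(5) by blast
    have "d \<noteq> 1"
    proof
      assume "d = 1"
      then have "int n dvd d'" using dd by simp
      then have "int n \<le> d'" using d' by (auto intro: zdvd_imp_le)
      then show False using lt by simp
    qed
    then have d1: "d > 1" using d by simp
    define e where "e = nat d"
    have "int e = d" using d e_def by simp
    then have "e \<in> Dn n" using d d1 lt unfolding Dn_def
      by (metis of_nat_dvd_iff of_nat_less_iff of_nat_1 mem_Collect_eq)
    moreover have "I = g e" using d \<open>int e = d\<close> g_def by simp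
    ultimately show "I \<in> g ` Dn n" by blast
  next
    fix I assume "I \<in> g ` Dn n"
    then obtain d where d: "d \<in> Dn n" "I = g d" by blast
    have d2: "d dvd n" "1 < d" "d < n" using d unfolding Dn_def by auto
    define d' where "d' = n div d"
    have nd: "n = d * d'" using d2 d'_def by simp
    have "d' > 0" using nd n by (metis gr0I mult_0_right not_numeral_le_zero)
    have "d' < n" using nd d2 \<open>d' > 0\<close> by simp
    have "ideal I ?R" using d Idv_ideal pos g_def by simp
    moreover have "I \<noteq> {\<zero>\<^bsub>?R\<^esub>}"
    proof -
      have "int d \<in> I" using d d2 g_def by (simp add: Idv_self)
      moreover have "int d \<noteq> \<zero>\<^bsub>?R\<^esub>" using d2 by (simp add: res_zero_eq)
      ultimately show ?thesis by auto
    qed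
    moreover have "ideal (Idv (int d')) ?R" using \<open>d' > 0\<close> nd by (intro Idv_ideal) auto
    moreover have "Idv (int d') \<noteq> {\<zero>\<^bsub>?R\<^esub>}"
    proof -
      have "int d' \<in> Idv (int d')" using \<open>d' > 0\<close> \<open>d' < n\<close> by (simp add: Idv_self)
      moreover have "int d' \<noteq> \<zero>\<^bsub>?R\<^esub>" using \<open>d' > 0\<close> by (simp add: res_zero_eq)
      ultimately show ?thesis by auto
    qed
    moreover have "ideal_prod ?R I (Idv (int d')) = {\<zero>\<^bsub>?R\<^esub>}"
      using Idv_prod_zero[of "int d" "int d'"] d2 \<open>d' > 0\<close> nd d g_def by simp
    ultimately show "I \<in> ag_vertices ?R" unfolding ag_vertices_def by blast
  qed
  show ?thesis unfolding V using perfect_iso[of g "Dn n" "ag_adj ?R" "En n", OF inj adj] by simp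
qed

lemma c5_div:
  fixes n v1 v2 v3 v4 v5 :: nat
  assumes n: "n > 0"
    and D: "v1 dvd n" "v2 dvd n" "v3 dvd n" "v4 dvd n" "v5 dvd n"
    and A: "n dvd v1*v2" "n dvd v2*v3" "n dvd v3*v4" "n dvd v4*v5" "n dvd v5*v1"
    and N: "\<not> n dvd v1*v3" "\<not> n dvd v1*v4" "\<not> n dvd v2*v4" "\<not> n dvd v2*v5" "\<not> n dvd v3*v5"
  shows "\<not> perfect_graph (Dn n) (En n)"
proof -
  have N': "\<not> n dvd v3*v1" "\<not> n dvd v4*v1" "\<not> n dvd v4*v2" "\<not> n dvd v5*v2" "\<not> n dvd v5*v3"
    using N by (simp_all add: mult.commute)
  have A': "n dvd v2*v1" "n dvd v3*v2" "n dvd v4*v3" "n dvd v5*v4" "n dvd v1*v5"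
    using A by (simp_all add: mult.commute)
  have nz: "v1 \<noteq> 0" "v2 \<noteq> 0" "v3 \<noteq> 0" "v4 \<noteq> 0" "v5 \<noteq> 0" using D n by auto
  have nn: "v1 \<noteq> n" "v2 \<noteq> n" "v3 \<noteq> n" "v4 \<noteq> n" "v5 \<noteq> n"
    using N N' by auto
  have le: "v1 \<le> n" "v2 \<le> n" "v3 \<le> n" "v4 \<le> n" "v5 \<le> n" using D n by (auto intro: dvd_imp_le)
  have n1: "v1 \<noteq> 1" "v2 \<noteq> 1" "v3 \<noteq> 1" "v4 \<noteq> 1" "v5 \<noteq> 1"
  proof -
    show "v1 \<noteq> 1" proof assume "v1 = 1" then have "n dvd v2" using A by simp
      then show False using D nn by (simp add: dvd_antisym) qed
    show "v2 \<noteq> 1" proof assume "v2 = 1" then have "n dvd v3" using A by simp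
      then show False using D nn by (simp add: dvd_antisym) qed
    show "v3 \<noteq> 1" proof assume "v3 = 1" then have "n dvd v4" using A by simp
      then show False using D nn by (simp add: dvd_antisym) qed
    show "v4 \<noteq> 1" proof assume "v4 = 1" then have "n dvd v5" using A by simp
      then show False using D nn by (simp add: dvd_antisym) qed
    show "v5 \<noteq> 1" proof assume "v5 = 1" then have "n dvd v1" using A by simp
      then show False using D nn by (simp add: dvd_antisym) qed
  qed
  have lt: "v1 < n" "v2 < n" "v3 < n" "v4 < n" "v5 < n" using le nn by (simp_all add: le_neq_implies_less)
  have gt: "1 < v1" "1 < v2" "1 < v3" "1 < v4" "1 < v5" using nz n1 by arith+
  have V: "v1 \<in> Dn n" "v2 \<in> Dn n" "v3 \<in> Dn n" "v4 \<in> Dn n" "v5 \<in> Dn n"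
    unfolding Dn_def using D lt gt by auto
  have dist: "v1 \<noteq> v2" "v2 \<noteq> v3" "v3 \<noteq> v4" "v4 \<noteq> v5" "v5 \<noteq> v1"
    using A N N' by metis+
  show ?thesis
    apply (rule c5_not_perfect[OF V])
    using A A' N N' dist unfolding En_def by auto
qed

lemma not_dvd_by_factor:
  fixes n M F :: nat
  assumes "F dvd n" "\<not> F dvd M"
  shows "\<not> n dvd M"
  using assms dvd_trans by blast

lemma coprime_not_dvd:
  fixes x M :: nat
  assumes "x > 1" "coprime x M"
  shows "\<not> x dvd M"
proof
  assume "x dvd M"
  then have "is_unit x" using assms(2) coprime_common_divisor dvd_refl by blast
  then show False using assms(1) by simp
qed

lemma pp_not_dvd:
  fixes p k a M :: nat
  assumes "prime p" "coprime p M" "k < a"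
  shows "\<not> p ^ a dvd p ^ k * M"
proof
  assume H: "p ^ a dvd p ^ k * M"
  have "p ^ a = p ^ k * p ^ (a - k)" using assms(3) by (simp add: power_add[symmetric])
  then have "p ^ k * p ^ (a - k) dvd p ^ k * M" using H by simp
  then have "p ^ (a - k) dvd M" using assms(1) by (simp add: prime_gt_0_nat)
  moreover have "p dvd p ^ (a - k)" using assms(3) by simp
  ultimately have "p dvd M" by (rule dvd_trans[rotated])
  then show False using assms(1,2) coprime_not_dvd prime_gt_1_nat by blast
qed

lemma bad5:
  fixes n x1 x2 x3 x4 x5 :: nat
  assumes n: "n = x1*x2*x3*x4*x5"
    and g: "x1 > 1" "x2 > 1" "x3 > 1" "x4 > 1" "x5 > 1"
    and c: "coprime x1 x2" "coprime x1 x3" "coprime x1 x4" "coprime x1 x5"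
      "coprime x2 x3" "coprime x2 x4" "coprime x2 x5" "coprime x3 x4" "coprime x3 x5" "coprime x4 x5"
  shows "\<not> perfect_graph (Dn n) (En n)"
proof -
  have c': "coprime x2 x1" "coprime x3 x1" "coprime x4 x1" "coprime x5 x1"
      "coprime x3 x2" "coprime x4 x2" "coprime x5 x2" "coprime x4 x3" "coprime x5 x3" "coprime x5 x4"
    using c by (simp_all add: coprime_commute)
  have npos: "n > 0" using n g by simp
  have f: "x1 dvd n" "x2 dvd n" "x3 dvd n" "x4 dvd n" "x5 dvd n" unfolding n by simp_all
  show ?thesis
  proof (rule c5_div[OF npos, of "x3*x4*x5" "x1*x2*x5" "x2*x3*x4" "x1*x4*x5" "x1*x2*x3"])
    show "x3*x4*x5 dvd n" "x1*x2*x5 dvd n" "x2*x3*x4 dvd n" "x1*x4*x5 dvd n" "x1*x2*x3 dvd n"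
      unfolding n by (simp_all add: dvd_def ac_simps)
  next
    show "n dvd x3*x4*x5 * (x1*x2*x5)" unfolding n by (rule dvdI[of _ _ x5]) (simp add: ac_simps)
    show "n dvd x1*x2*x5 * (x2*x3*x4)" unfolding n by (rule dvdI[of _ _ x2]) (simp add: ac_simps)
    show "n dvd x2*x3*x4 * (x1*x4*x5)" unfolding n by (rule dvdI[of _ _ x4]) (simp add: ac_simps)
    show "n dvd x1*x4*x5 * (x1*x2*x3)" unfolding n by (rule dvdI[of _ _ x1]) (simp add: ac_simps)
    show "n dvd x1*x2*x3 * (x3*x4*x5)" unfolding n by (rule dvdI[of _ _ x3]) (simp add: ac_simps)
  next
    show "\<not> n dvd x3*x4*x5 * (x2*x3*x4)"
      by (rule not_dvd_by_factor[OF f(1)], rule coprime_not_dvd[OF g(1)]) (simp add: c)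
    show "\<not> n dvd x3*x4*x5 * (x1*x4*x5)"
      by (rule not_dvd_by_factor[OF f(2)], rule coprime_not_dvd[OF g(2)]) (simp add: c c')
    show "\<not> n dvd x1*x2*x5 * (x1*x4*x5)"
      by (rule not_dvd_by_factor[OF f(3)], rule coprime_not_dvd[OF g(3)]) (simp add: c c')
    show "\<not> n dvd x1*x2*x5 * (x1*x2*x3)"
      by (rule not_dvd_by_factor[OF f(4)], rule coprime_not_dvd[OF g(4)]) (simp add: c c')
    show "\<not> n dvd x2*x3*x4 * (x1*x2*x3)"
      by (rule not_dvd_by_factor[OF f(5)], rule coprime_not_dvd[OF g(5)]) (simp add: c c')
  qed
qed

lemma bad4:
  fixes n p b x y z :: nat
  assumes n: "n = p^(b+2)*x*y*z" and p: "prime p"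
    and g: "x > 1" "y > 1" "z > 1"
    and c: "coprime x y" "coprime x z" "coprime y z" "coprime p x" "coprime p y" "coprime p z"
  shows "\<not> perfect_graph (Dn n) (En n)"
proof -
  have c': "coprime y x" "coprime z x" "coprime z y" "coprime x p" "coprime y p" "coprime z p"
    using c by (simp_all add: coprime_commute)
  have pp: "p > 0" using p prime_gt_0_nat by blast
  have npos: "n > 0" using n g pp by simp
  have f: "x dvd n" "y dvd n" "z dvd n" "p^(b+2) dvd n" unfolding n by simp_all
  show ?thesis
  proof (rule c5_div[OF npos, of "x*y*z" "p^(b+2)*z" "p^(b+1)*x*y" "p*y*z" "p^(b+2)*x"])
    show "x*y*z dvd n" "p^(b+2)*z dvd n" "p^(b+1)*x*y dvd n" "p*y*z dvd n" "p^(b+2)*x dvd n"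
      unfolding n by (simp_all add: dvd_def ac_simps)
  next
    show "n dvd x*y*z * (p^(b+2)*z)" unfolding n by (rule dvdI[of _ _ z]) (simp add: ac_simps)
    show "n dvd p^(b+2)*z * (p^(b+1)*x*y)" unfolding n by (rule dvdI[of _ _ "p^(b+1)"]) (simp add: ac_simps)
    show "n dvd p^(b+1)*x*y * (p*y*z)" unfolding n by (rule dvdI[of _ _ y]) (simp add: ac_simps)
    show "n dvd p*y*z * (p^(b+2)*x)" unfolding n by (rule dvdI[of _ _ p]) (simp add: ac_simps)
    show "n dvd p^(b+2)*x * (x*y*z)" unfolding n by (rule dvdI[of _ _ x]) (simp add: ac_simps)
  next
    have "x*y*z * (p^(b+1)*x*y) = p^(b+1) * (x*x*y*y*z)" by (simp add: ac_simps)
    moreover have "\<not> p^(b+2) dvd p^(b+1) * (x*x*y*y*z)" by (rule pp_not_dvd[OF p]) (simp_all add: c)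
    ultimately show "\<not> n dvd x*y*z * (p^(b+1)*x*y)" using not_dvd_by_factor[OF f(4)] by metis
    have "x*y*z * (p*y*z) = p^1 * (x*y*y*z*z)" by (simp add: ac_simps)
    moreover have "\<not> p^(b+2) dvd p^1 * (x*y*y*z*z)" by (rule pp_not_dvd[OF p]) (simp_all add: c)
    ultimately show "\<not> n dvd x*y*z * (p*y*z)" using not_dvd_by_factor[OF f(4)] by metis
    show "\<not> n dvd p^(b+2)*z * (p*y*z)"
      by (rule not_dvd_by_factor[OF f(1)], rule coprime_not_dvd[OF g(1)]) (simp add: c c')
    show "\<not> n dvd p^(b+2)*z * (p^(b+2)*x)"
      by (rule not_dvd_by_factor[OF f(2)], rule coprime_not_dvd[OF g(2)]) (simp add: c c')
    show "\<not> n dvd p^(b+1)*x*y * (p^(b+2)*x)"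
      by (rule not_dvd_by_factor[OF f(3)], rule coprime_not_dvd[OF g(3)]) (simp add: c c')
  qed
qed

lemma bad3:
  fixes n p q a b x :: nat
  assumes n: "n = p^(a+2)*q^(b+2)*x" and p: "prime p" and q: "prime q" and pq: "p \<noteq> q"
    and g: "x > 1"
    and c: "coprime p x" "coprime q x"
  shows "\<not> perfect_graph (Dn n) (En n)"
proof -
  have cpq: "coprime p q" "coprime q p" using p q pq by (simp_all add: primes_coprime)
  have c': "coprime x p" "coprime x q" using c by (simp_all add: coprime_commute)
  have pp: "p > 0" "q > 0" using p q prime_gt_0_nat by blast+
  have npos: "n > 0" using n g pp by simp
  have f: "x dvd n" "p^(a+2) dvd n" "q^(b+2) dvd n" unfolding n by simp_all
  show ?thesis
  proof (rule c5_div[OF npos, of "q^(b+2)*x" "p^(a+2)*x" "p^(a+1)*q^(b+2)" "p*q^(b+1)*x" "p^(a+2)*q"])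
    show "q^(b+2)*x dvd n" "p^(a+2)*x dvd n" "p^(a+1)*q^(b+2) dvd n" "p*q^(b+1)*x dvd n" "p^(a+2)*q dvd n"
      unfolding n by (simp_all add: dvd_def ac_simps)
  next
    show "n dvd q^(b+2)*x * (p^(a+2)*x)" unfolding n by (rule dvdI[of _ _ x]) (simp add: ac_simps)
    show "n dvd p^(a+2)*x * (p^(a+1)*q^(b+2))" unfolding n by (rule dvdI[of _ _ "p^(a+1)"]) (simp add: ac_simps)
    show "n dvd p^(a+1)*q^(b+2) * (p*q^(b+1)*x)" unfolding n by (rule dvdI[of _ _ "q^(b+1)"]) (simp add: ac_simps)
    show "n dvd p*q^(b+1)*x * (p^(a+2)*q)" unfolding n by (rule dvdI[of _ _ p]) (simp add: ac_simps)
    show "n dvd p^(a+2)*q * (q^(b+2)*x)" unfolding n by (rule dvdI[of _ _ q]) (simp add: ac_simps)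
  next
    have "q^(b+2)*x * (p^(a+1)*q^(b+2)) = p^(a+1) * (q^(b+2)*q^(b+2)*x)" by (simp add: ac_simps)
    moreover have "\<not> p^(a+2) dvd p^(a+1) * (q^(b+2)*q^(b+2)*x)" by (rule pp_not_dvd[OF p]) (simp_all add: c cpq)
    ultimately show "\<not> n dvd q^(b+2)*x * (p^(a+1)*q^(b+2))" using not_dvd_by_factor[OF f(2)] by metis
    have "q^(b+2)*x * (p*q^(b+1)*x) = p^1 * (q^(b+2)*q^(b+1)*x*x)" by (simp add: ac_simps)
    moreover have "\<not> p^(a+2) dvd p^1 * (q^(b+2)*q^(b+1)*x*x)" by (rule pp_not_dvd[OF p]) (simp_all add: c cpq)
    ultimately show "\<not> n dvd q^(b+2)*x * (p*q^(b+1)*x)" using not_dvd_by_factor[OF f(2)] by metis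
    have "p^(a+2)*x * (p*q^(b+1)*x) = q^(b+1) * (p^(a+2)*p*x*x)" by (simp add: ac_simps)
    moreover have "\<not> q^(b+2) dvd q^(b+1) * (p^(a+2)*p*x*x)" by (rule pp_not_dvd[OF q]) (simp_all add: c cpq)
    ultimately show "\<not> n dvd p^(a+2)*x * (p*q^(b+1)*x)" using not_dvd_by_factor[OF f(3)] by metis
    have "p^(a+2)*x * (p^(a+2)*q) = q^1 * (p^(a+2)*p^(a+2)*x)" by (simp add: ac_simps)
    moreover have "\<not> q^(b+2) dvd q^1 * (p^(a+2)*p^(a+2)*x)" by (rule pp_not_dvd[OF q]) (simp_all add: c cpq)
    ultimately show "\<not> n dvd p^(a+2)*x * (p^(a+2)*q)" using not_dvd_by_factor[OF f(3)] by metis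
    show "\<not> n dvd p^(a+1)*q^(b+2) * (p^(a+2)*q)"
      by (rule not_dvd_by_factor[OF f(1)], rule coprime_not_dvd[OF g]) (simp add: c')
  qed
qed

lemma peel:
  fixes m p :: nat
  assumes "m > 0" "prime p" "p dvd m"
  obtains a r where "a \<ge> 1" "m = p^a * r" "coprime p r" "r > 0"
proof -
  obtain k where k: "k = multiplicity p m" by blast
  have "m \<noteq> 0" "\<not> is_unit p" using assms by auto
  then obtain r where r0: "m = p ^ multiplicity p m * r" "\<not> p dvd r"
    using multiplicity_decompose'[of m p] by blast
  have r: "m = p ^ k * r" "\<not> p dvd r" using r0 k by metis+
  have "k \<noteq> 0"
  proof
    assume "k = 0"
    then have "m = r" using r(1) by simp
    then show False using r(2) assms(3) by simp
  qed
  moreover have "coprime p r" using r(2) assms(2) by (simp add: prime_imp_coprime)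
  moreover have "r > 0" using r(1) assms(1) by (cases "r = 0") auto
  ultimately show ?thesis using that[of k r] r(1) by auto
qed

lemma prime_pow_gt1:
  fixes p a :: nat
  assumes "prime p" "a \<ge> 1"
  shows "p ^ a > 1"
  using assms by (intro one_less_power) (auto dest: prime_gt_1_nat)

lemma coprime_primes_neq:
  fixes p q :: nat
  assumes "prime p" "coprime p q"
  shows "p \<noteq> q"
  using assms by auto

lemma classify_neg:
  fixes n :: nat
  assumes n2: "n \<ge> 2"
    and nf: "\<not> ((\<exists>p1 a1. prime p1 \<and> a1 \<ge> 1 \<and> n = p1 ^ a1) \<or>
     (\<exists>p1 p2 a1 a2. prime p1 \<and> prime p2 \<and> p1 \<noteq> p2 \<and> a1 \<ge> 1 \<and> a2 \<ge> 1 \<and>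
        n = p1 ^ a1 * p2 ^ a2) \<or>
     (\<exists>p1 p2 p3 a1. prime p1 \<and> prime p2 \<and> prime p3 \<and> distinct [p1, p2, p3] \<and> a1 \<ge> 1 \<and>
        n = p1 ^ a1 * p2 * p3) \<or>
     (\<exists>p1 p2 p3 p4. prime p1 \<and> prime p2 \<and> prime p3 \<and> prime p4 \<and>
        distinct [p1, p2, p3, p4] \<and> n = p1 * p2 * p3 * p4))"
  shows "\<not> perfect_graph (Dn n) (En n)"
proof -
  have nf1: "\<not> (\<exists>p1 a1. prime p1 \<and> a1 \<ge> 1 \<and> n = p1 ^ a1)"
    and nf2: "\<not> (\<exists>p1 p2 a1 a2. prime p1 \<and> prime p2 \<and> p1 \<noteq> p2 \<and> a1 \<ge> 1 \<and> a2 \<ge> 1 \<and>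
        n = p1 ^ a1 * p2 ^ a2)"
    and nf3: "\<not> (\<exists>p1 p2 p3 a1. prime p1 \<and> prime p2 \<and> prime p3 \<and> distinct [p1, p2, p3] \<and> a1 \<ge> 1 \<and>
        n = p1 ^ a1 * p2 * p3)"
    and nf4: "\<not> (\<exists>p1 p2 p3 p4. prime p1 \<and> prime p2 \<and> prime p3 \<and> prime p4 \<and>
        distinct [p1, p2, p3, p4] \<and> n = p1 * p2 * p3 * p4)"
    using nf by blast+
  have "n \<noteq> 1" using n2 by simp
  then obtain p1 where p1: "prime p1" "p1 dvd n" using prime_factor_nat by blast
  obtain a1 r1 where r1: "a1 \<ge> 1" "n = p1^a1 * r1" "coprime p1 r1" "r1 > 0"
    using peel[of n p1] n2 p1 by auto
  show ?thesis
  proof (cases "r1 = 1")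
    case True
    then have "prime p1 \<and> a1 \<ge> 1 \<and> n = p1 ^ a1" using p1 r1 by simp
    then show ?thesis using nf1 by blast
  next
    case r1ne: False
    then obtain p2 where p2: "prime p2" "p2 dvd r1" using prime_factor_nat by blast
    obtain a2 r2 where r2: "a2 \<ge> 1" "r1 = p2^a2 * r2" "coprime p2 r2" "r2 > 0"
      using peel[of r1 p2] r1 p2 by auto
    have c12: "coprime p1 p2" "coprime p1 r2" using r1(3) r2(1,2) by auto
    have d12: "p1 \<noteq> p2" using c12 p1 by auto
    show ?thesis
    proof (cases "r2 = 1")
      case True
      then have "n = p1^a1 * p2^a2" using r1 r2 by simp
      then have "prime p1 \<and> prime p2 \<and> p1 \<noteq> p2 \<and> a1 \<ge> 1 \<and> a2 \<ge> 1 \<and> n = p1 ^ a1 * p2 ^ a2"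
        using p1 p2 r1 r2 d12 by simp
      then show ?thesis using nf2 by blast
    next
      case r2ne: False
      then obtain p3 where p3: "prime p3" "p3 dvd r2" using prime_factor_nat by blast
      obtain a3 r3 where r3: "a3 \<ge> 1" "r2 = p3^a3 * r3" "coprime p3 r3" "r3 > 0"
        using peel[of r2 p3] r2 p3 by auto
      have c3: "coprime p1 p3" "coprime p1 r3" "coprime p2 p3" "coprime p2 r3"
        using c12 r2(3) r3(1,2) by auto
      have d3: "p1 \<noteq> p3" "p2 \<noteq> p3" using c3 p1 p2 by auto
      show ?thesis
      proof (cases "r3 = 1")
        case True
        then have n3: "n = p1^a1 * p2^a2 * p3^a3" using r1 r2 r3 by (simp add: ac_simps)
        consider "a1 \<ge> 2" "a2 \<ge> 2" | "a1 \<ge> 2" "a3 \<ge> 2" | "a2 \<ge> 2" "a3 \<ge> 2"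
          | "a2 = 1" "a3 = 1" | "a1 = 1" "a3 = 1" | "a1 = 1" "a2 = 1"
          using r1(1) r2(1) r3(1) by linarith
        then show ?thesis
        proof cases
          case 1
          then obtain a b where ab: "a1 = a + 2" "a2 = b + 2" by (metis le_add_diff_inverse2)
          show ?thesis
            by (rule bad3[of n p1 a p2 b "p3^a3"])
              (use n3 ab p1 p2 p3 d12 d3 c3 r3 prime_pow_gt1 in \<open>simp_all add: coprime_commute\<close>)
        next
          case 2
          then obtain a b where ab: "a1 = a + 2" "a3 = b + 2" by (metis le_add_diff_inverse2)
          show ?thesis
            by (rule bad3[of n p1 a p3 b "p2^a2"])
              (use n3 ab p1 p2 p3 d12 d3 c3 c12 r2 prime_pow_gt1 in \<open>simp_all add: coprime_commute ac_simps\<close>)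
        next
          case 3
          then obtain a b where ab: "a2 = a + 2" "a3 = b + 2" by (metis le_add_diff_inverse2)
          show ?thesis
            by (rule bad3[of n p2 a p3 b "p1^a1"])
              (use n3 ab p1 p2 p3 d12 d3 c3 c12 r1 prime_pow_gt1 in \<open>simp_all add: coprime_commute ac_simps\<close>)
        next
          case 4
          then have "n = p1^a1 * p2 * p3" using n3 by simp
          then have "prime p1 \<and> prime p2 \<and> prime p3 \<and> distinct [p1, p2, p3] \<and> a1 \<ge> 1 \<and> n = p1 ^ a1 * p2 * p3"
            using p1 p2 p3 d12 d3 r1 by simp
          then have False using nf3 by blast
          then show ?thesis ..
        next
          case 5
          then have "n = p2^a2 * p1 * p3" using n3 by (simp add: ac_simps)
          then have "prime p2 \<and> prime p1 \<and> prime p3 \<and> distinct [p2, p1, p3] \<and> a2 \<ge> 1 \<and> n = p2 ^ a2 * p1 * p3"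
            using p1 p2 p3 d12 d3 r2 by auto
          then have False using nf3 by blast
          then show ?thesis ..
        next
          case 6
          then have "n = p3^a3 * p1 * p2" using n3 by (simp add: ac_simps)
          then have "prime p3 \<and> prime p1 \<and> prime p2 \<and> distinct [p3, p1, p2] \<and> a3 \<ge> 1 \<and> n = p3 ^ a3 * p1 * p2"
            using p1 p2 p3 d12 d3 r3 by auto
          then have False using nf3 by blast
          then show ?thesis ..
        qed
      next
        case r3ne: False
        then obtain p4 where p4: "prime p4" "p4 dvd r3" using prime_factor_nat by blast
        obtain a4 r4 where r4: "a4 \<ge> 1" "r3 = p4^a4 * r4" "coprime p4 r4" "r4 > 0"
          using peel[of r3 p4] r3 p4 by auto
        have c4: "coprime p1 p4" "coprime p1 r4" "coprime p2 p4" "coprime p2 r4"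
          "coprime p3 p4" "coprime p3 r4"
          using c3 r3(3) r4(1,2) by auto
        have d4: "p1 \<noteq> p4" "p2 \<noteq> p4" "p3 \<noteq> p4" using c4 p1 p2 p3 by auto
        have n4: "n = p1^a1 * p2^a2 * p3^a3 * p4^a4 * r4" using r1 r2 r3 r4 by (simp add: ac_simps)
        show ?thesis
        proof (cases "r4 = 1")
          case True
          then have n4': "n = p1^a1 * p2^a2 * p3^a3 * p4^a4" using n4 by simp
          consider "a1 \<ge> 2" | "a2 \<ge> 2" | "a3 \<ge> 2" | "a4 \<ge> 2" | "a1 = 1" "a2 = 1" "a3 = 1" "a4 = 1"
            using r1(1) r2(1) r3(1) r4(1) by linarith
          then show ?thesis
          proof cases
            case 1
            then obtain b where b: "a1 = b + 2" by (metis le_add_diff_inverse2)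
            show ?thesis
              by (rule bad4[of n p1 b "p2^a2" "p3^a3" "p4^a4"])
                (use n4' b p1 p2 p3 p4 c12 c3 c4 r2 r3 r4 prime_pow_gt1 in \<open>simp_all add: coprime_commute ac_simps\<close>)
          next
            case 2
            then obtain b where b: "a2 = b + 2" by (metis le_add_diff_inverse2)
            show ?thesis
              by (rule bad4[of n p2 b "p1^a1" "p3^a3" "p4^a4"])
                (use n4' b p1 p2 p3 p4 c12 c3 c4 r1 r3 r4 prime_pow_gt1 in \<open>simp_all add: coprime_commute ac_simps\<close>)
          next
            case 3
            then obtain b where b: "a3 = b + 2" by (metis le_add_diff_inverse2)
            show ?thesis
              by (rule bad4[of n p3 b "p1^a1" "p2^a2" "p4^a4"])
                (use n4' b p1 p2 p3 p4 c12 c3 c4 r1 r2 r4 prime_pow_gt1 in \<open>simp_all add: coprime_commute ac_simps\<close>)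
          next
            case 4
            then obtain b where b: "a4 = b + 2" by (metis le_add_diff_inverse2)
            show ?thesis
              by (rule bad4[of n p4 b "p1^a1" "p2^a2" "p3^a3"])
                (use n4' b p1 p2 p3 p4 c12 c3 c4 r1 r2 r3 prime_pow_gt1 in \<open>simp_all add: coprime_commute ac_simps\<close>)
          next
            case 5
            then have "n = p1 * p2 * p3 * p4" using n4' by simp
            then have "prime p1 \<and> prime p2 \<and> prime p3 \<and> prime p4 \<and> distinct [p1, p2, p3, p4] \<and> n = p1 * p2 * p3 * p4"
              using p1 p2 p3 p4 d12 d3 d4 by auto
            then have False using nf4 by blast
            then show ?thesis ..
          qed
        next
          case False
          then have r4g: "r4 > 1" using r4 by simp
          show ?thesis
            by (rule bad5[of n "p1^a1" "p2^a2" "p3^a3" "p4^a4" r4])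
              (use n4 p1 p2 p3 p4 c12 c3 c4 r1 r2 r3 r4 r4g prime_pow_gt1 in \<open>simp_all add: coprime_commute\<close>)
        qed
      qed
    qed
  qed
qed

lemma ex_min_on:
  fixes f :: "'a \<Rightarrow> nat"
  assumes "finite S" "S \<noteq> {}"
  obtains v where "v \<in> S" "\<And>u. u \<in> S \<Longrightarrow> f v \<le> f u"
proof -
  obtain v where "v \<in> S" "\<not> (\<exists>u\<in>S. f u < f v)"
    using arg_min_if_finite[OF assms, of f] by blast
  then show ?thesis using that by (meson not_le)
qed

lemma elim1:
  fixes x :: "'v \<Rightarrow> nat"
  assumes E: "\<And>u v. E u v \<longleftrightarrow> u \<noteq> v \<and> a \<le> x u + x v"
    and S: "finite S" "S \<noteq> {}"
  shows "\<exists>v\<in>S. elim_vertex S E v"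
proof -
  obtain v where v: "v \<in> S" "\<And>u. u \<in> S \<Longrightarrow> x v \<le> x u" using ex_min_on[OF S] by blast
  have "elim_vertex S E v"
    unfolding elim_vertex_def
  proof (intro disjI2 ballI impI)
    fix u1 u2 assume "u1 \<in> S" "u2 \<in> S" "E v u1" "E v u2" "u1 \<noteq> u2"
    then show "E u1 u2" using v E[of v u1] E[of v u2] E[of u1 u2] by fastforce
  qed
  then show ?thesis using v by blast
qed

lemma elim2_half:
  fixes x y :: "'v \<Rightarrow> nat"
  assumes E: "\<And>u v. E u v \<longleftrightarrow> u \<noteq> v \<and> a \<le> x u + x v \<and> b \<le> y u + y v"
    and S: "finite S" and v0: "v0 \<in> S" "2 * y v0 < b"
  shows "\<exists>v\<in>S. elim_vertex S E v"
proof -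
  define Q where "Q = {v\<in>S. 2 * y v < b}"
  have Q: "finite Q" "Q \<noteq> {}" using S v0 Q_def by auto
  obtain z where z: "z \<in> Q" "\<And>u. u \<in> Q \<Longrightarrow> y z \<le> y u" using ex_min_on[OF Q] by blast
  have zS: "z \<in> S" "2 * y z < b" using z Q_def by auto
  show ?thesis
  proof (cases "elim_vertex S E z")
    case True
    then show ?thesis using zS by blast
  next
    case False
    then obtain u1 u2 where u: "u1 \<in> S" "u2 \<in> S" "E z u1" "E z u2" "u1 \<noteq> u2" "\<not> E u1 u2"
      unfolding elim_vertex_def by blast
    have yu: "b \<le> y z + y u1" "b \<le> y z + y u2" using u(3,4) E by auto
    have key: "elim_vertex S E w1" if w: "w1 \<in> S" "w2 \<in> S" "E z w1" "E z w2" "w1 \<noteq> w2"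
      "\<not> E w1 w2" "x w1 \<le> x w2" for w1 w2
    proof -
      have yw: "b \<le> y z + y w1" "b \<le> y z + y w2" using w(3,4) E by auto
      have "y w1 + y w2 \<ge> b" using yw zS by linarith
      then have xs: "x w1 + x w2 < a" using w(5,6) E[of w1 w2] by auto
      have "\<forall>u\<in>S. E w1 u \<longrightarrow> E w2 u"
      proof (intro ballI impI)
        fix u assume uS: "u \<in> S" and e: "E w1 u"
        have "u \<noteq> w2" using e w(6) by auto
        moreover have "a \<le> x w2 + x u" using e E[of w1 u] w(7) by auto
        moreover have "b \<le> y w2 + y u"
        proof (cases "2 * y u < b")
          case True
          then have "u \<in> Q" using uS Q_def by auto
          then have "y z \<le> y u" using z by blast
          then show ?thesis using yw by linarith
        next
          case False
          then show ?thesis using yw zS by linarith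
        qed
        ultimately show "E w2 u" using E by auto
      qed
      then show ?thesis unfolding elim_vertex_def using w by auto
    qed
    show ?thesis
    proof (cases "x u1 \<le> x u2")
      case True
      then show ?thesis using key[of u1 u2] u by blast
    next
      case False
      have "\<not> E u2 u1" using u(6) E by auto
      then show ?thesis using key[of u2 u1] u False by auto
    qed
  qed
qed

lemma elim2:
  fixes x y :: "'v \<Rightarrow> nat"
  assumes E: "\<And>u v. E u v \<longleftrightarrow> u \<noteq> v \<and> a \<le> x u + x v \<and> b \<le> y u + y v"
    and S: "finite S" "S \<noteq> {}"
  shows "\<exists>v\<in>S. elim_vertex S E v"
proof (cases "\<exists>v\<in>S. 2 * y v < b")
  case True
  then show ?thesis using elim2_half[OF E S(1)] by blast
next
  case F1: False
  show ?thesis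
  proof (cases "\<exists>v\<in>S. 2 * x v < a")
    case True
    have E': "\<And>u v. E u v \<longleftrightarrow> u \<noteq> v \<and> b \<le> y u + y v \<and> a \<le> x u + x v" using E by auto
    then show ?thesis using elim2_half[OF E' S(1)] True by blast
  next
    case False
    obtain v where v: "v \<in> S" using S by blast
    have "elim_vertex S E v"
      unfolding elim_vertex_def
    proof (intro disjI2 ballI impI)
      fix u1 u2 assume "u1 \<in> S" "u2 \<in> S" "E v u1" "E v u2" "u1 \<noteq> u2"
      then have "\<not> 2 * y u1 < b" "\<not> 2 * y u2 < b" "\<not> 2 * x u1 < a" "\<not> 2 * x u2 < a"
        using F1 False by auto
      then show "E u1 u2" using E[of u1 u2] \<open>u1 \<noteq> u2\<close> by linarith
    qed
    then show ?thesis using v by blast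
  qed
qed

lemma elim3:
  fixes x s t :: "'v \<Rightarrow> nat"
  assumes E: "\<And>u v. E u v \<longleftrightarrow> u \<noteq> v \<and> a \<le> x u + x v \<and> 1 \<le> s u + s v \<and> 1 \<le> t u + t v"
    and bnd: "\<And>v. v \<in> S \<Longrightarrow> s v \<le> 1 \<and> t v \<le> 1"
    and S: "finite S" "S \<noteq> {}"
  shows "\<exists>v\<in>S. elim_vertex S E v"
proof (rule ccontr)
  assume "\<not> ?thesis"
  then have NE: "\<And>v. v \<in> S \<Longrightarrow> \<not> elim_vertex S E v" by blast
  have sym: "E u v \<longleftrightarrow> E v u" for u v using E[of u v] E[of v u] by auto
  have dom: False if "u \<in> S" "w \<in> S" "u \<noteq> w" "\<not> E u w" "x u \<le> x w" "s u \<le> s w" "t u \<le> t w" for u w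
  proof -
    have "\<forall>z\<in>S. E u z \<longrightarrow> E w z"
    proof (intro ballI impI)
      fix z assume "z \<in> S" "E u z"
      then have "z \<noteq> w" using that by auto
      then show "E w z" using \<open>E u z\<close> E[of u z] E[of w z] that by auto
    qed
    then have "elim_vertex S E u" unfolding elim_vertex_def using that by auto
    then show False using NE that by blast
  qed
  have dom2: False if "u \<in> S" "w \<in> S" "u \<noteq> w" "\<not> E u w" "s u = s w" "t u = t w" for u w
  proof (cases "x u \<le> x w")
    case True
    then show ?thesis using dom[of u w] that by auto
  next
    case False
    then show ?thesis using dom[of w u] that sym by auto
  qed
  have nb: "\<exists>u1\<in>S. \<exists>u2\<in>S. E v u1 \<and> E v u2 \<and> u1 \<noteq> u2 \<and> \<not> E u1 u2" if "v \<in> S" for v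
    using NE[OF that] unfolding elim_vertex_def by blast
  have b01: "s v = 0 \<or> s v = 1" "t v = 0 \<or> t v = 1" if "v \<in> S" for v using bnd[OF that] by auto
  have no00: False if H: "v \<in> S" "s v = 0" "t v = 0" for v
  proof -
    obtain u1 u2 where u: "u1 \<in> S" "u2 \<in> S" "E v u1" "E v u2" "u1 \<noteq> u2" "\<not> E u1 u2"
      using nb[OF H(1)] by blast
    have "s u1 = 1" "s u2 = 1" "t u1 = 1" "t u2 = 1" using u E[of v u1] E[of v u2] H bnd u(1,2) by force+
    then show False using dom2[of u1 u2] u by auto
  qed
  have Fcl: "E u w" if "u \<in> S" "w \<in> S" "u \<noteq> w" "s u = 1" "t u = 1" "s w = 1" "t w = 1" for u w
    using dom2[of u w] that by auto
  have Qun: "u = w" if "u \<in> S" "w \<in> S" "s u = 1" "t u = 0" "s w = 1" "t w = 0" for u w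
  proof (rule ccontr)
    assume "u \<noteq> w"
    moreover have "\<not> E u w" using E[of u w] that by auto
    ultimately show False using dom2[of u w] that by auto
  qed
  have Run: "u = w" if "u \<in> S" "w \<in> S" "s u = 0" "t u = 1" "s w = 0" "t w = 1" for u w
  proof (rule ccontr)
    assume "u \<noteq> w"
    moreover have "\<not> E u w" using E[of u w] that by auto
    ultimately show False using dom2[of u w] that by auto
  qed
  \<comment> \<open>neighbours of a vertex with s = 0 have s = 1, so one of them is in Q\<close>
  have getQ: "\<exists>q\<in>S. s q = 1 \<and> t q = 0" if H: "v \<in> S" "s v = 0" for v
  proof -
    obtain u1 u2 where u: "u1 \<in> S" "u2 \<in> S" "E v u1" "E v u2" "u1 \<noteq> u2" "\<not> E u1 u2"
      using nb[OF H(1)] by blast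
    have "s u1 = 1" "s u2 = 1" using u E[of v u1] E[of v u2] H bnd u(1,2) by force+
    then show ?thesis using Fcl[of u1 u2] u b01 by metis
  qed
  have getR: "\<exists>r\<in>S. s r = 0 \<and> t r = 1" if H: "v \<in> S" "t v = 0" for v
  proof -
    obtain u1 u2 where u: "u1 \<in> S" "u2 \<in> S" "E v u1" "E v u2" "u1 \<noteq> u2" "\<not> E u1 u2"
      using nb[OF H(1)] by blast
    have "t u1 = 1" "t u2 = 1" using u E[of v u1] E[of v u2] H bnd u(1,2) by force+
    then show ?thesis using Fcl[of u1 u2] u b01 by metis
  qed
  obtain v0 where v0: "v0 \<in> S" using S by blast
  obtain w where w: "w \<in> S" "s w = 0 \<or> t w = 0"
  proof -
    obtain u1 u2 where u: "u1 \<in> S" "u2 \<in> S" "E v0 u1" "E v0 u2" "u1 \<noteq> u2" "\<not> E u1 u2"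
      using nb[OF v0] by blast
    then show ?thesis using that Fcl[of u1 u2] b01 by metis
  qed
  obtain q0 r0 where q0: "q0 \<in> S" "s q0 = 1" "t q0 = 0" and r0: "r0 \<in> S" "s r0 = 0" "t r0 = 1"
  proof (cases "s w = 0")
    case True
    then obtain q where q: "q \<in> S" "s q = 1" "t q = 0" using getQ w by blast
    then obtain r where "r \<in> S" "s r = 0" "t r = 1" using getR by blast
    then show ?thesis using that q by blast
  next
    case False
    then have "t w = 0" using w by auto
    then obtain r where r: "r \<in> S" "s r = 0" "t r = 1" using getR w by blast
    then obtain q where "q \<in> S" "s q = 1" "t q = 0" using getQ by blast
    then show ?thesis using that r by blast
  qed
  obtain f where f: "f \<in> S" "s f = 1" "t f = 1" "E q0 f" "E q0 r0" "\<not> E r0 f"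
  proof -
    obtain u1 u2 where u: "u1 \<in> S" "u2 \<in> S" "E q0 u1" "E q0 u2" "u1 \<noteq> u2" "\<not> E u1 u2"
      using nb[OF q0(1)] by blast
    have t1: "t u1 = 1" "t u2 = 1" using u E[of q0 u1] E[of q0 u2] q0 bnd u(1,2) by force+
    consider "s u1 = 0" | "s u2 = 0" | "s u1 = 1" "s u2 = 1" using b01(1)[OF u(1)] b01(1)[OF u(2)] by metis
    then show ?thesis
    proof cases
      case 1
      then have "u1 = r0" using Run[of u1 r0] u t1 r0 by auto
      moreover have "s u2 = 1"
      proof (rule ccontr)
        assume "s u2 \<noteq> 1" then have "s u2 = 0" using b01(1)[OF u(2)] by blast
        then have "u2 = r0" using Run[of u2 r0] u t1 r0 by auto
        then show False using \<open>u1 = r0\<close> u by auto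
      qed
      ultimately show ?thesis using that u t1 by auto
    next
      case 2
      then have "u2 = r0" using Run[of u2 r0] u t1 r0 by auto
      moreover have "s u1 = 1"
      proof (rule ccontr)
        assume "s u1 \<noteq> 1" then have "s u1 = 0" using b01(1)[OF u(1)] by blast
        then have "u1 = r0" using Run[of u1 r0] u t1 r0 by auto
        then show False using \<open>u2 = r0\<close> u by auto
      qed
      ultimately show ?thesis using that u t1 sym by auto
    next
      case 3
      then show ?thesis using Fcl[of u1 u2] u t1 by auto
    qed
  qed
  obtain g where g: "g \<in> S" "s g = 1" "t g = 1" "E r0 g" "E r0 q0" "\<not> E q0 g"
  proof -
    obtain u1 u2 where u: "u1 \<in> S" "u2 \<in> S" "E r0 u1" "E r0 u2" "u1 \<noteq> u2" "\<not> E u1 u2"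
      using nb[OF r0(1)] by blast
    have s1: "s u1 = 1" "s u2 = 1" using u E[of r0 u1] E[of r0 u2] r0 bnd u(1,2) by force+
    consider "t u1 = 0" | "t u2 = 0" | "t u1 = 1" "t u2 = 1" using b01(2)[OF u(1)] b01(2)[OF u(2)] by metis
    then show ?thesis
    proof cases
      case 1
      then have "u1 = q0" using Qun[of u1 q0] u s1 q0 by auto
      moreover have "t u2 = 1"
      proof (rule ccontr)
        assume "t u2 \<noteq> 1" then have "t u2 = 0" using b01(2)[OF u(2)] by blast
        then have "u2 = q0" using Qun[of u2 q0] u s1 q0 by auto
        then show False using \<open>u1 = q0\<close> u by auto
      qed
      ultimately show ?thesis using that u s1 by auto
    next
      case 2
      then have "u2 = q0" using Qun[of u2 q0] u s1 q0 by auto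
      moreover have "t u1 = 1"
      proof (rule ccontr)
        assume "t u1 \<noteq> 1" then have "t u1 = 0" using b01(2)[OF u(1)] by blast
        then have "u1 = q0" using Qun[of u1 q0] u s1 q0 by auto
        then show False using \<open>u2 = q0\<close> u by auto
      qed
      ultimately show ?thesis using that u s1 sym by auto
    next
      case 3
      then show ?thesis using Fcl[of u1 u2] u s1 by auto
    qed
  qed
  have "r0 \<noteq> f" using r0 f by auto
  then have A1: "x r0 + x f < a" using f(6) E[of r0 f] r0 f by auto
  have "q0 \<noteq> g" using q0 g by auto
  then have A2: "x q0 + x g < a" using g(6) E[of q0 g] q0 g by auto
  have A3: "a \<le> x q0 + x f" using f(4) E by auto
  have A4: "a \<le> x r0 + x g" using g(4) E by auto
  show False using A1 A2 A3 A4 by linarith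
qed

lemma bool4:
  fixes v1 v2 v3 v4 a1 a2 a3 a4 b1 b2 b3 b4 :: nat
  assumes "v1 \<le> 1" "v2 \<le> 1" "v3 \<le> 1" "v4 \<le> 1" "a1 \<le> 1" "a2 \<le> 1" "a3 \<le> 1" "a4 \<le> 1"
    "b1 \<le> 1" "b2 \<le> 1" "b3 \<le> 1" "b4 \<le> 1"
    "1 \<le> v1 + a1" "1 \<le> v2 + a2" "1 \<le> v3 + a3" "1 \<le> v4 + a4"
    "1 \<le> v1 + b1" "1 \<le> v2 + b2" "1 \<le> v3 + b3" "1 \<le> v4 + b4"
    "\<not> (1 \<le> a1 + b1 \<and> 1 \<le> a2 + b2 \<and> 1 \<le> a3 + b3 \<and> 1 \<le> a4 + b4)"
    "v1 + v2 + v3 + v4 \<le> a1 + a2 + a3 + a4" "v1 + v2 + v3 + v4 \<le> b1 + b2 + b3 + b4"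
  shows "(a1 \<le> b1 \<and> a2 \<le> b2 \<and> a3 \<le> b3 \<and> a4 \<le> b4) \<or> (b1 \<le> a1 \<and> b2 \<le> a2 \<and> b3 \<le> a3 \<and> b4 \<le> a4)"
  using assms by arith

lemma elim4:
  fixes c1 c2 c3 c4 :: "'v \<Rightarrow> nat"
  assumes E: "\<And>u v. E u v \<longleftrightarrow> u \<noteq> v \<and> 1 \<le> c1 u + c1 v \<and> 1 \<le> c2 u + c2 v \<and> 1 \<le> c3 u + c3 v \<and> 1 \<le> c4 u + c4 v"
    and bnd: "\<And>v. v \<in> S \<Longrightarrow> c1 v \<le> 1 \<and> c2 v \<le> 1 \<and> c3 v \<le> 1 \<and> c4 v \<le> 1"
    and S: "finite S" "S \<noteq> {}"
  shows "\<exists>v\<in>S. elim_vertex S E v"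
proof -
  have dom: "elim_vertex S E u" if "u \<in> S" "w \<in> S" "u \<noteq> w" "\<not> E u w"
    "c1 u \<le> c1 w" "c2 u \<le> c2 w" "c3 u \<le> c3 w" "c4 u \<le> c4 w" for u w
  proof -
    have "\<forall>z\<in>S. E u z \<longrightarrow> E w z"
    proof (intro ballI impI)
      fix z assume "z \<in> S" "E u z"
      then have "z \<noteq> w" using that by auto
      then show "E w z" using \<open>E u z\<close> E[of u z] E[of w z] that by auto
    qed
    then show ?thesis unfolding elim_vertex_def using that by auto
  qed
  obtain v where v: "v \<in> S" "\<And>u. u \<in> S \<Longrightarrow> c1 v + c2 v + c3 v + c4 v \<le> c1 u + c2 u + c3 u + c4 u"
    using ex_min_on[OF S, of "\<lambda>u. c1 u + c2 u + c3 u + c4 u"] by blast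
  show ?thesis
  proof (cases "elim_vertex S E v")
    case True
    then show ?thesis using v by blast
  next
    case False
    then obtain u1 u2 where u: "u1 \<in> S" "u2 \<in> S" "E v u1" "E v u2" "u1 \<noteq> u2" "\<not> E u1 u2"
      unfolding elim_vertex_def by blast
    have ne: "\<not> (1 \<le> c1 u1 + c1 u2 \<and> 1 \<le> c2 u1 + c2 u2 \<and> 1 \<le> c3 u1 + c3 u2 \<and> 1 \<le> c4 u1 + c4 u2)"
      using u(5,6) E[of u1 u2] by auto
    have "(c1 u1 \<le> c1 u2 \<and> c2 u1 \<le> c2 u2 \<and> c3 u1 \<le> c3 u2 \<and> c4 u1 \<le> c4 u2) \<or>
          (c1 u2 \<le> c1 u1 \<and> c2 u2 \<le> c2 u1 \<and> c3 u2 \<le> c3 u1 \<and> c4 u2 \<le> c4 u1)"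
      apply (rule bool4[of "c1 v" "c2 v" "c3 v" "c4 v"])
      using bnd[OF v(1)] bnd[OF u(1)] bnd[OF u(2)] E[of v u1] E[of v u2] u(3,4) ne v(2)[OF u(1)] v(2)[OF u(2)]
      by auto
    moreover have "\<not> E u2 u1" using u(6) E[of u1 u2] E[of u2 u1] by auto
    ultimately show ?thesis using dom[of u1 u2] dom[of u2 u1] u by auto
  qed
qed

lemma elim_cong:
  assumes "\<And>u w. u \<in> S \<Longrightarrow> w \<in> S \<Longrightarrow> E u w = E' u w" "v \<in> S"
  shows "elim_vertex S E v = elim_vertex S E' v"
  unfolding elim_vertex_def using assms by (auto 0 3)

lemma mpow:
  fixes r p a :: nat
  assumes "prime r" "prime p"
  shows "multiplicity r (p ^ a) = (if r = p then a else 0)"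
  using assms by (auto simp: multiplicity_distinct_prime_power)

lemma mmul:
  fixes r x y :: nat
  assumes "prime r" "x \<noteq> 0" "y \<noteq> 0"
  shows "multiplicity r (x * y) = multiplicity r x + multiplicity r y"
  using assms by (simp add: prime_elem_multiplicity_mult_distrib)

lemma En_mult:
  assumes "n > 0" "d > 0" "d' > 0"
  shows "En n d d' \<longleftrightarrow> d \<noteq> d' \<and>
    (\<forall>r. prime r \<longrightarrow> multiplicity r n \<le> multiplicity r d + multiplicity r d')"
proof -
  have "n dvd d * d' \<longleftrightarrow> (\<forall>r. prime r \<longrightarrow> multiplicity r n \<le> multiplicity r (d * d'))"
    using assms by (auto intro: multiplicity_le_imp_dvd dvd_imp_multiplicity_le)
  also have "\<dots> \<longleftrightarrow> (\<forall>r. prime r \<longrightarrow> multiplicity r n \<le> multiplicity r d + multiplicity r d')"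
    using assms mmul by auto
  finally show ?thesis unfolding En_def by simp
qed

lemma Dn_basic:
  assumes "d \<in> Dn n"
  shows "d > 0" "n > 0" "d dvd n"
  using assms unfolding Dn_def by auto

lemma Dn_mult_le:
  assumes "d \<in> Dn n"
  shows "multiplicity r d \<le> multiplicity r n"
  using assms Dn_basic[OF assms] by (intro dvd_imp_multiplicity_le) auto

lemma finite_Dn: "finite (Dn n)"
  unfolding Dn_def by (rule finite_subset[of _ "{..n}"]) auto

lemma En_sym: "En n x y \<Longrightarrow> En n y x"
  unfolding En_def by (auto simp: mult.commute)

lemma En_irr: "\<not> En n x x"
  unfolding En_def by auto

lemma perfect_from_elim:
  assumes "\<And>S. S \<subseteq> Dn n \<Longrightarrow> S \<noteq> {} \<Longrightarrow> \<exists>v\<in>S. elim_vertex S (En n) v"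
  shows "perfect_graph (Dn n) (En n)"
  by (rule perfect_by_elim[OF finite_Dn]) (use En_sym En_irr assms in auto)

lemma perfect_F1:
  fixes p a n :: nat
  assumes p: "prime p" and n: "n = p ^ a"
  shows "perfect_graph (Dn n) (En n)"
proof (rule perfect_from_elim)
  fix S assume S: "S \<subseteq> Dn n" "S \<noteq> {}"
  have finS: "finite S" using S finite_Dn finite_subset by blast
  define E' where "E' u v \<longleftrightarrow> u \<noteq> v \<and> a \<le> multiplicity p u + multiplicity p v" for u v
  have eq: "En n u w = E' u w" if "u \<in> S" "w \<in> S" for u w
  proof -
    have u: "u \<in> Dn n" "w \<in> Dn n" using that S by auto
    have mn: "multiplicity r n = (if r = p then a else 0)" if "prime r" for r
      using mpow[OF that p] n by simp
    show ?thesis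
      unfolding En_mult[OF Dn_basic(2)[OF u(1)] Dn_basic(1)[OF u(1)] Dn_basic(1)[OF u(2)]] E'_def
      using mn p by (metis (no_types, opaque_lifting) zero_le)
  qed
  obtain v where "v \<in> S" "elim_vertex S E' v" using elim1[of E' a "multiplicity p", OF _ finS S(2)] E'_def by blast
  then show "\<exists>v\<in>S. elim_vertex S (En n) v" using elim_cong[of S "En n" E' v] eq by blast
qed


lemma perfect_F2:
  fixes p q a b n :: nat
  assumes p: "prime p" and q: "prime q" and pq: "p \<noteq> q" and n: "n = p ^ a * q ^ b"
  shows "perfect_graph (Dn n) (En n)"
proof (rule perfect_from_elim)
  fix S assume S: "S \<subseteq> Dn n" "S \<noteq> {}"
  have finS: "finite S" using S finite_Dn finite_subset by blast
  define E' where "E' u v \<longleftrightarrow> u \<noteq> v \<and> a \<le> multiplicity p u + multiplicity p v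
     \<and> b \<le> multiplicity q u + multiplicity q v" for u v
  have mn: "multiplicity r n = (if r = p then a else 0) + (if r = q then b else 0)" if "prime r" for r
    using mpow[OF that p] mpow[OF that q] mmul[OF that] n p q by (simp add: prime_gt_0_nat)
  have eq: "En n u w = E' u w" if "u \<in> S" "w \<in> S" for u w
  proof -
    have u: "u \<in> Dn n" "w \<in> Dn n" using that S by auto
    have "(\<forall>r. prime r \<longrightarrow> multiplicity r n \<le> multiplicity r u + multiplicity r w) \<longleftrightarrow>
          a \<le> multiplicity p u + multiplicity p w \<and> b \<le> multiplicity q u + multiplicity q w"
    proof
      assume H: "\<forall>r. prime r \<longrightarrow> multiplicity r n \<le> multiplicity r u + multiplicity r w"
      show "a \<le> multiplicity p u + multiplicity p w \<and> b \<le> multiplicity q u + multiplicity q w"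
        using H[rule_format, OF p] H[rule_format, OF q] mn[OF p] mn[OF q] pq by simp
    next
      assume H: "a \<le> multiplicity p u + multiplicity p w \<and> b \<le> multiplicity q u + multiplicity q w"
      show "\<forall>r. prime r \<longrightarrow> multiplicity r n \<le> multiplicity r u + multiplicity r w"
        using H mn pq by auto
    qed
    then show ?thesis
      unfolding En_mult[OF Dn_basic(2)[OF u(1)] Dn_basic(1)[OF u(1)] Dn_basic(1)[OF u(2)]] E'_def
      by simp
  qed
  obtain v where "v \<in> S" "elim_vertex S E' v"
    using elim2[of E' a "multiplicity p" b "multiplicity q", OF _ finS S(2)] E'_def by blast
  then show "\<exists>v\<in>S. elim_vertex S (En n) v" using elim_cong[of S "En n" E' v] eq by blast
qed

lemma perfect_F3:
  fixes p q r a n :: nat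
  assumes p: "prime p" and q: "prime q" and r: "prime r" and d: "distinct [p, q, r]"
    and n: "n = p ^ a * q * r"
  shows "perfect_graph (Dn n) (En n)"
proof (rule perfect_from_elim)
  fix S assume S: "S \<subseteq> Dn n" "S \<noteq> {}"
  have finS: "finite S" using S finite_Dn finite_subset by blast
  define E' where "E' u v \<longleftrightarrow> u \<noteq> v \<and> a \<le> multiplicity p u + multiplicity p v
     \<and> 1 \<le> multiplicity q u + multiplicity q v \<and> 1 \<le> multiplicity r u + multiplicity r v" for u v
  have mn: "multiplicity z n = (if z = p then a else 0) + (if z = q then 1 else 0) + (if z = r then 1 else 0)"
    if "prime z" for z
    using mpow[OF that p] mpow[OF that q, of 1] mpow[OF that r, of 1] mmul[OF that] n p q r
    by (simp add: prime_gt_0_nat)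
  have eq: "En n u w = E' u w" if "u \<in> S" "w \<in> S" for u w
  proof -
    have u: "u \<in> Dn n" "w \<in> Dn n" using that S by auto
    have "(\<forall>z. prime z \<longrightarrow> multiplicity z n \<le> multiplicity z u + multiplicity z w) \<longleftrightarrow>
          a \<le> multiplicity p u + multiplicity p w \<and> 1 \<le> multiplicity q u + multiplicity q w
          \<and> 1 \<le> multiplicity r u + multiplicity r w"
    proof
      assume H: "\<forall>z. prime z \<longrightarrow> multiplicity z n \<le> multiplicity z u + multiplicity z w"
      show "a \<le> multiplicity p u + multiplicity p w \<and> 1 \<le> multiplicity q u + multiplicity q w
          \<and> 1 \<le> multiplicity r u + multiplicity r w"
        using H[rule_format, OF p] H[rule_format, OF q] H[rule_format, OF r] mn[OF p] mn[OF q] mn[OF r] d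
        by simp
    next
      assume H: "a \<le> multiplicity p u + multiplicity p w \<and> 1 \<le> multiplicity q u + multiplicity q w
          \<and> 1 \<le> multiplicity r u + multiplicity r w"
      show "\<forall>z. prime z \<longrightarrow> multiplicity z n \<le> multiplicity z u + multiplicity z w"
        using H mn d by auto
    qed
    then show ?thesis
      unfolding En_mult[OF Dn_basic(2)[OF u(1)] Dn_basic(1)[OF u(1)] Dn_basic(1)[OF u(2)]] E'_def
      by simp
  qed
  have bnd: "multiplicity q v \<le> 1 \<and> multiplicity r v \<le> 1" if "v \<in> S" for v
    using Dn_mult_le[of v n q] Dn_mult_le[of v n r] that S mn[OF q] mn[OF r] d by auto
  obtain v where "v \<in> S" "elim_vertex S E' v"
    using elim3[of E' a "multiplicity p" "multiplicity q" "multiplicity r", OF _ bnd finS S(2)] E'_def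
    by blast
  then show "\<exists>v\<in>S. elim_vertex S (En n) v" using elim_cong[of S "En n" E' v] eq by blast
qed

lemma perfect_F4:
  fixes p q r s n :: nat
  assumes p: "prime p" and q: "prime q" and r: "prime r" and s: "prime s" and d: "distinct [p, q, r, s]"
    and n: "n = p * q * r * s"
  shows "perfect_graph (Dn n) (En n)"
proof (rule perfect_from_elim)
  fix S assume S: "S \<subseteq> Dn n" "S \<noteq> {}"
  have finS: "finite S" using S finite_Dn finite_subset by blast
  define E' where "E' u v \<longleftrightarrow> u \<noteq> v \<and> 1 \<le> multiplicity p u + multiplicity p v
     \<and> 1 \<le> multiplicity q u + multiplicity q v \<and> 1 \<le> multiplicity r u + multiplicity r v
     \<and> 1 \<le> multiplicity s u + multiplicity s v" for u v
  have mn: "multiplicity z n = (if z = p then 1 else 0) + (if z = q then 1 else 0) + (if z = r then 1 else 0)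
     + (if z = s then 1 else 0)"
    if "prime z" for z
    using mpow[OF that p, of 1] mpow[OF that q, of 1] mpow[OF that r, of 1] mpow[OF that s, of 1]
      mmul[OF that] n p q r s
    by (simp add: prime_gt_0_nat)
  have eq: "En n u w = E' u w" if "u \<in> S" "w \<in> S" for u w
  proof -
    have u: "u \<in> Dn n" "w \<in> Dn n" using that S by auto
    have "(\<forall>z. prime z \<longrightarrow> multiplicity z n \<le> multiplicity z u + multiplicity z w) \<longleftrightarrow>
          1 \<le> multiplicity p u + multiplicity p w \<and> 1 \<le> multiplicity q u + multiplicity q w
          \<and> 1 \<le> multiplicity r u + multiplicity r w \<and> 1 \<le> multiplicity s u + multiplicity s w"
    proof
      assume H: "\<forall>z. prime z \<longrightarrow> multiplicity z n \<le> multiplicity z u + multiplicity z w"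
      show "1 \<le> multiplicity p u + multiplicity p w \<and> 1 \<le> multiplicity q u + multiplicity q w
          \<and> 1 \<le> multiplicity r u + multiplicity r w \<and> 1 \<le> multiplicity s u + multiplicity s w"
        using H[rule_format, OF p] H[rule_format, OF q] H[rule_format, OF r] H[rule_format, OF s]
          mn[OF p] mn[OF q] mn[OF r] mn[OF s] d
        by simp
    next
      assume H: "1 \<le> multiplicity p u + multiplicity p w \<and> 1 \<le> multiplicity q u + multiplicity q w
          \<and> 1 \<le> multiplicity r u + multiplicity r w \<and> 1 \<le> multiplicity s u + multiplicity s w"
      show "\<forall>z. prime z \<longrightarrow> multiplicity z n \<le> multiplicity z u + multiplicity z w"
        using H mn d by auto
    qed
    then show ?thesis
      unfolding En_mult[OF Dn_basic(2)[OF u(1)] Dn_basic(1)[OF u(1)] Dn_basic(1)[OF u(2)]] E'_def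
      by simp
  qed
  have bnd: "multiplicity p v \<le> 1 \<and> multiplicity q v \<le> 1 \<and> multiplicity r v \<le> 1 \<and> multiplicity s v \<le> 1"
    if "v \<in> S" for v
    using Dn_mult_le[of v n p] Dn_mult_le[of v n q] Dn_mult_le[of v n r] Dn_mult_le[of v n s]
      that S mn[OF p] mn[OF q] mn[OF r] mn[OF s] d by auto
  obtain v where "v \<in> S" "elim_vertex S E' v"
    using elim4[of E' "multiplicity p" "multiplicity q" "multiplicity r" "multiplicity s", OF _ bnd finS S(2)]
      E'_def by blast
  then show "\<exists>v\<in>S. elim_vertex S (En n) v" using elim_cong[of S "En n" E' v] eq by blast
qed

theorem theorem1:
  fixes n :: nat
  assumes "n \<ge> 2"
  shows "perfect_graph (ag_vertices (residue_ring (int n))) (ag_adj (residue_ring (int n)))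
    \<longleftrightarrow>
    ((\<exists>p1 a1. prime p1 \<and> a1 \<ge> 1 \<and> n = p1 ^ a1) \<or>
     (\<exists>p1 p2 a1 a2. prime p1 \<and> prime p2 \<and> p1 \<noteq> p2 \<and> a1 \<ge> 1 \<and> a2 \<ge> 1 \<and>
        n = p1 ^ a1 * p2 ^ a2) \<or>
     (\<exists>p1 p2 p3 a1. prime p1 \<and> prime p2 \<and> prime p3 \<and> distinct [p1, p2, p3] \<and> a1 \<ge> 1 \<and>
        n = p1 ^ a1 * p2 * p3) \<or>
     (\<exists>p1 p2 p3 p4. prime p1 \<and> prime p2 \<and> prime p3 \<and> prime p4 \<and>
        distinct [p1, p2, p3, p4] \<and> n = p1 * p2 * p3 * p4))"
  (is "?L \<longleftrightarrow> ?R")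
proof -
  have L: "?L \<longleftrightarrow> perfect_graph (Dn n) (En n)" using ag_iso[OF assms] .
  show ?thesis
  proof
    assume "?L"
    then have "perfect_graph (Dn n) (En n)" using L by simp
    then show "?R" using classify_neg[OF assms] by blast
  next
    assume R: "?R"
    have "perfect_graph (Dn n) (En n)"
    proof -
      consider (c1) p1 a1 where "prime p1" "n = p1 ^ a1"
        | (c2) p1 p2 a1 a2 where "prime p1" "prime p2" "p1 \<noteq> p2" "n = p1 ^ a1 * p2 ^ a2"
        | (c3) p1 p2 p3 a1 where "prime p1" "prime p2" "prime p3" "distinct [p1, p2, p3]" "n = p1 ^ a1 * p2 * p3"
        | (c4) p1 p2 p3 p4 where "prime p1" "prime p2" "prime p3" "prime p4" "distinct [p1, p2, p3, p4]"
            "n = p1 * p2 * p3 * p4"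
        using R by blast
      then show ?thesis
      proof cases
        case c1 then show ?thesis using perfect_F1 by blast
      next
        case c2 then show ?thesis using perfect_F2 by blast
      next
        case c3 then show ?thesis using perfect_F3 by blast
      next
        case c4 then show ?thesis using perfect_F4 by blast
      qed
    qed
    then show "?L" using L by simp
  qed
qed

end
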